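(* Let $\{\Delta_1,\dots,\Delta_r\}$ be a nef-partition of a reflexive polytope $\Delta$ with dual nef-partition $\{\nabla_1,\dots,\nabla_r\}$, let $i\in J\subset I=\{1,\dots,r\}$ and $v\in\nabla_i^0$. Then a lattice point $w\in M$ lies in the relative interior of $\sum_{j\in J}\Delta_j(v)$ if and only if $w\in\Delta_i^0$ and $v$ lies in the relative interior of $\nabla_i(w)+\sum_{j\notin J}\nabla_j(w)$. Moreover, in this case $$\dim\Big(\sum_{j\in J}\Delta_j(v)\Big)+\dim\Big(\nabla_i(w)+\sum_{j\notin J}\nabla_j(w)\Big)=d-1.$$
   Context: Let $M\cong\mathbb Z^d$, $N=\mathrm{Hom}(M,\mathbb Z)$, $\langle\cdot,\cdot\rangle$ the pairing. A $d$-dimensional lattice polytope $\Delta\subset M_{\mathbb R}$ is reflexive if $\Delta=\{x:\langle x,e_k\rangle\ge-1,\ k=1,\dots,n\}$ with $e_k\in N$ the primitive inward facet normals; $\Delta^*=\mathrm{Conv}(e_1,\dots,e_n)$. A nef-partition is a Minkowski decomposition $\Delta=\Delta_1+\dots+\Delta_r$ into lattice polytopes with $\varphi_j(e_k)\in\{0,1\}$ for all $j,k$, $\varphi_j(y)=-\min_{x\in\Delta_j}\langle x,y\rangle$; the dual nef-partition consists of $\nabla_j=\mathrm{Conv}(\{0\}\cup\{e_k:\varphi_j(e_k)=1\})\subset N_{\mathbb R}$, and $\nabla^*=\mathrm{Conv}(\Delta_1\cup\dots\cup\Delta_r)$ is reflexive. Put $\nabla_i^0=\nabla_i\cap\partial\Delta^*\cap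 N$ and $\Delta_i^0=\Delta_i\cap\partial\nabla^*\cap M$. For $v\in N$, $\Delta_j(v)$ is the face of $\Delta_j$ on which $\langle\cdot,v\rangle$ attains its minimum; for $w\in M$, $\nabla_j(w)$ is the face of $\nabla_j$ on which $\langle w,\cdot\rangle$ attains its minimum. *)

theory Defs
  imports "HOL-Analysis.Analysis"
begin

text \<open>We identify both M_R and N_R with real^'n (d = CARD('n)) via a lattice basis and
its dual basis; the pairing is then the standard inner product, and M, N are the
integer vectors.\<close>

definition lattice_pt :: "real^'n \<Rightarrow> bool" where
  "lattice_pt x \<longleftrightarrow> (\<forall>i. x $ i \<in> \<int>)"

definition primitive :: "real^'n \<Rightarrow> bool" where
  "primitive e \<longleftrightarrow> lattice_pt e \<and> e \<noteq> 0 \<and>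
     (\<forall>u (k::int). lattice_pt u \<and> k \<ge> 1 \<and> e = of_int k *\<^sub>R u \<longrightarrow> k = 1)"

definition lattice_polytope :: "(real^'n) set \<Rightarrow> bool" where
  "lattice_polytope P \<longleftrightarrow> (\<exists>S. finite S \<and> (\<forall>x\<in>S. lattice_pt x) \<and> P = convex hull S)"

definition minface :: "(real^'n) set \<Rightarrow> real^'n \<Rightarrow> (real^'n) set" where
  "minface P y = {x \<in> P. x \<bullet> y = Inf ((\<lambda>z. z \<bullet> y) ` P)}"

definition facet_normals :: "(real^'n) set \<Rightarrow> (real^'n) set" where
  "facet_normals P = {e. primitive e \<and> minface P e facet_of P}"

definition reflexive :: "(real^'n) set \<Rightarrow> bool" where
  "reflexive P \<longleftrightarrow> lattice_polytope P \<and> aff_dim P = int CARD('n) \<and>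
     P = {x. \<forall>e\<in>facet_normals P. x \<bullet> e \<ge> -1}"

definition dual_polytope :: "(real^'n) set \<Rightarrow> (real^'n) set" where
  "dual_polytope P = convex hull (facet_normals P)"

definition msum :: "'i set \<Rightarrow> ('i \<Rightarrow> (real^'n) set) \<Rightarrow> (real^'n) set" where
  "msum J F = {y. \<exists>x. (\<forall>j\<in>J. x j \<in> F j) \<and> y = (\<Sum>j\<in>J. x j)}"

definition mplus :: "(real^'n) set \<Rightarrow> (real^'n) set \<Rightarrow> (real^'n) set" where
  "mplus A B = {a + b | a b. a \<in> A \<and> b \<in> B}"

definition phi :: "(real^'n) set \<Rightarrow> real^'n \<Rightarrow> real" where
  "phi P y = - Inf ((\<lambda>x. x \<bullet> y) ` P)"

definition nef_partition :: "(real^'n) set \<Rightarrow> nat \<Rightarrow> (nat \<Rightarrow> (real^'n) set) \<Rightarrow> bool" where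
  "nef_partition D r Ds \<longleftrightarrow> reflexive D \<and>
     (\<forall>j\<in>{1..r}. lattice_polytope (Ds j)) \<and>
     D = msum {1..r} Ds \<and>
     (\<forall>j\<in>{1..r}. \<forall>e\<in>facet_normals D. phi (Ds j) e \<in> {0, 1})"

definition nabla :: "(real^'n) set \<Rightarrow> (nat \<Rightarrow> (real^'n) set) \<Rightarrow> nat \<Rightarrow> (real^'n) set" where
  "nabla D Ds j = convex hull ({0} \<union> {e \<in> facet_normals D. phi (Ds j) e = 1})"

definition nabla_dual :: "nat \<Rightarrow> (nat \<Rightarrow> (real^'n) set) \<Rightarrow> (real^'n) set" where
  "nabla_dual r Ds = convex hull (\<Union>j\<in>{1..r}. Ds j)"

definition nabla0 :: "(real^'n) set \<Rightarrow> (nat \<Rightarrow> (real^'n) set) \<Rightarrow> nat \<Rightarrow> (real^'n) set" where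
  "nabla0 D Ds i = nabla D Ds i \<inter> frontier (dual_polytope D) \<inter> Collect lattice_pt"

definition Delta0 :: "nat \<Rightarrow> (nat \<Rightarrow> (real^'n) set) \<Rightarrow> nat \<Rightarrow> (real^'n) set" where
  "Delta0 r Ds i = Ds i \<inter> frontier (nabla_dual r Ds) \<inter> Collect lattice_pt"

end

theory Submission
  imports Defs
begin

definition mn :: "(real^'n) set \<Rightarrow> real^'n \<Rightarrow> real" where
  "mn P y = Inf ((\<lambda>z. z \<bullet> y) ` P)"

lemma mn_props:
  fixes P :: "(real^'n) set"
  assumes "compact P" "P \<noteq> {}"
  shows "\<exists>p\<in>P. mn P y = p \<bullet> y" and "\<And>q. q \<in> P \<Longrightarrow> mn P y \<le> q \<bullet> y"
proof -
  have "continuous_on P (\<lambda>z. z \<bullet> y)" by (intro continuous_intros)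
  then obtain p where p: "p \<in> P" "\<And>q. q \<in> P \<Longrightarrow> p \<bullet> y \<le> q \<bullet> y"
    using continuous_attains_inf[OF assms, of "\<lambda>z. z \<bullet> y"] by blast
  have "mn P y = p \<bullet> y" unfolding mn_def
    by (rule cInf_eq_minimum) (use p in auto)
  then show "\<exists>p\<in>P. mn P y = p \<bullet> y" using p by auto
  show "\<And>q. q \<in> P \<Longrightarrow> mn P y \<le> q \<bullet> y" using p \<open>mn P y = p \<bullet> y\<close> by auto
qed

lemma mn_eqI:
  assumes "p \<in> P" "p \<bullet> y = c" "\<And>q. q \<in> P \<Longrightarrow> c \<le> q \<bullet> y"
  shows "mn P y = c"
  unfolding mn_def by (rule cInf_eq_minimum) (use assms in auto)

lemma minface_mn: "minface P y = {x \<in> P. x \<bullet> y = mn P y}"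
  by (simp add: minface_def mn_def)

lemma phi_mn: "phi P y = - mn P y"
  by (simp add: phi_def mn_def)

lemma minface_iff:
  fixes P :: "(real^'n) set"
  assumes "compact P" "P \<noteq> {}"
  shows "x \<in> minface P y \<longleftrightarrow> x \<in> P \<and> (\<forall>q\<in>P. x \<bullet> y \<le> q \<bullet> y)"
proof -
  obtain p where p: "p \<in> P" "mn P y = p \<bullet> y" using mn_props(1)[OF assms, of y] by blast
  have l: "\<And>q. q \<in> P \<Longrightarrow> mn P y \<le> q \<bullet> y" using mn_props(2)[OF assms] by blast
  show ?thesis unfolding minface_mn using p l by (auto intro: order_antisym)
qed

lemma minface_ne:
  fixes P :: "(real^'n) set"
  assumes "compact P" "P \<noteq> {}"
  shows "minface P y \<noteq> {}"
  using mn_props[OF assms, of y] unfolding minface_mn by auto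

lemma msum_setsum:
  assumes "finite J"
  shows "msum J F = sum F J"
  unfolding msum_def set_sum_alt[OF assms] by auto

lemma msum_insert:
  assumes "finite K" "i \<notin> K"
  shows "msum (insert i K) P = mplus (P i) (msum K P)"
  using assms by (simp add: msum_setsum mplus_def set_plus_def) blast

lemma msum_empty: "msum {} P = {0}"
  by (simp add: msum_def)

lemma msum_mem:
  assumes "\<And>j. j \<in> J \<Longrightarrow> x j \<in> F j"
  shows "(\<Sum>j\<in>J. x j) \<in> msum J F"
  using assms unfolding msum_def by auto

lemma msum_elim:
  assumes "y \<in> msum J F"
  obtains x where "\<And>j. j \<in> J \<Longrightarrow> x j \<in> F j" "y = (\<Sum>j\<in>J. x j)"
  using assms unfolding msum_def by auto

lemma sum_eq_le_imp_eq:
  fixes f g :: "'a \<Rightarrow> real"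
  assumes "finite I" "\<And>j. j \<in> I \<Longrightarrow> g j \<le> f j" "sum f I = sum g I" "j \<in> I"
  shows "f j = g j"
proof -
  have "sum (\<lambda>j. f j - g j) I = 0" using assms(3) by (simp add: sum_subtractf)
  moreover have nn: "\<And>j. j \<in> I \<Longrightarrow> 0 \<le> f j - g j" using assms(2) by simp
  ultimately have "\<forall>j\<in>I. f j - g j = 0"
    using sum_nonneg_eq_0_iff[OF assms(1), of "\<lambda>j. f j - g j", OF nn] by simp
  then show ?thesis using assms(4) by auto
qed

lemma msum_compact_ne:
  fixes P :: "'i \<Rightarrow> (real^'n) set"
  assumes "finite J" "\<And>j. j \<in> J \<Longrightarrow> compact (P j) \<and> P j \<noteq> {}"
  shows "compact (msum J P)" "msum J P \<noteq> {}"
proof -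
  show "compact (msum J P)" using assms
  proof (induction J rule: finite_induct)
    case empty then show ?case by (simp add: msum_empty)
  next
    case (insert i K)
    have "msum (insert i K) P = (\<lambda>z. fst z + snd z) ` (P i \<times> msum K P)"
      using insert by (auto simp: msum_insert mplus_def image_iff; force)
    moreover have "compact (P i \<times> msum K P)" using insert by (auto intro: compact_Times)
    ultimately show ?case by (auto intro!: compact_continuous_image continuous_intros)
  qed
  have "\<forall>j\<in>J. \<exists>x. x \<in> P j" using assms by auto
  then obtain x where "\<And>j. j \<in> J \<Longrightarrow> x j \<in> P j" by metis
  then show "msum J P \<noteq> {}" using msum_mem by blast
qed

lemma msum_mn_minface:
  fixes P :: "'i \<Rightarrow> (real^'n) set"
  assumes "finite J" "\<And>j. j \<in> J \<Longrightarrow> compact (P j) \<and> P j \<noteq> {}"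
  shows "mn (msum J P) y = (\<Sum>j\<in>J. mn (P j) y)"
    and "minface (msum J P) y = msum J (\<lambda>j. minface (P j) y)"
proof -
  have "\<forall>j\<in>J. \<exists>p. p \<in> P j \<and> mn (P j) y = p \<bullet> y"
  proof
    fix j assume "j \<in> J"
    then have "compact (P j)" "P j \<noteq> {}" using assms(2) by auto
    from mn_props(1)[OF this, of y] show "\<exists>p. p \<in> P j \<and> mn (P j) y = p \<bullet> y" by blast
  qed
  then obtain p where p: "\<And>j. j \<in> J \<Longrightarrow> p j \<in> P j \<and> mn (P j) y = p j \<bullet> y" by metis
  have low: "(\<Sum>j\<in>J. mn (P j) y) \<le> z \<bullet> y" if zin: "z \<in> msum J P" for z
  proof -
    obtain x where x: "\<And>j. j \<in> J \<Longrightarrow> x j \<in> P j" "z = (\<Sum>j\<in>J. x j)" using msum_elim[OF zin] by metis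
    have "z \<bullet> y = (\<Sum>j\<in>J. x j \<bullet> y)" by (simp add: x(2) inner_sum_left)
    also have "\<dots> \<ge> (\<Sum>j\<in>J. mn (P j) y)"
    proof (rule sum_mono)
      fix j assume "j \<in> J"
      then have "compact (P j)" "P j \<noteq> {}" "x j \<in> P j" using assms(2) x(1) by auto
      then show "mn (P j) y \<le> x j \<bullet> y" using mn_props(2) by blast
    qed
    finally show ?thesis .
  qed
  have pin: "(\<Sum>j\<in>J. p j) \<in> msum J P" by (rule msum_mem) (use p in auto)
  have pval: "(\<Sum>j\<in>J. p j) \<bullet> y = (\<Sum>j\<in>J. mn (P j) y)" by (simp add: inner_sum_left p)
  show mneq: "mn (msum J P) y = (\<Sum>j\<in>J. mn (P j) y)"
    by (rule mn_eqI[OF pin pval low])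
  show "minface (msum J P) y = msum J (\<lambda>j. minface (P j) y)"
  proof
    show "minface (msum J P) y \<subseteq> msum J (\<lambda>j. minface (P j) y)"
    proof
      fix z assume z: "z \<in> minface (msum J P) y"
      then have zin: "z \<in> msum J P" and zv: "z \<bullet> y = (\<Sum>j\<in>J. mn (P j) y)"
        by (auto simp: minface_mn mneq)
      obtain x where x: "\<And>j. j \<in> J \<Longrightarrow> x j \<in> P j" "z = (\<Sum>j\<in>J. x j)" using msum_elim[OF zin] by metis
      have ge: "\<And>j. j \<in> J \<Longrightarrow> mn (P j) y \<le> x j \<bullet> y"
      proof -
        fix j assume "j \<in> J"
        then have "compact (P j)" "P j \<noteq> {}" "x j \<in> P j" using assms(2) x(1) by auto
        then show "mn (P j) y \<le> x j \<bullet> y" using mn_props(2) by blast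
      qed
      have sm: "(\<Sum>j\<in>J. x j \<bullet> y) = (\<Sum>j\<in>J. mn (P j) y)"
        using zv x(2) by (simp add: inner_sum_left)
      have "\<And>j. j \<in> J \<Longrightarrow> x j \<bullet> y = mn (P j) y"
        using sum_eq_le_imp_eq[OF assms(1), where f="\<lambda>j. x j \<bullet> y" and g="\<lambda>j. mn (P j) y", OF ge sm] by blast
      then show "z \<in> msum J (\<lambda>j. minface (P j) y)"
        using x by (auto intro!: msum_mem simp: minface_mn)
    qed
  next
    show "msum J (\<lambda>j. minface (P j) y) \<subseteq> minface (msum J P) y"
    proof
      fix z assume "z \<in> msum J (\<lambda>j. minface (P j) y)"
      then obtain x where x: "\<And>j. j \<in> J \<Longrightarrow> x j \<in> minface (P j) y" "z = (\<Sum>j\<in>J. x j)"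
        using msum_elim by metis
      then have "z \<in> msum J P" by (auto intro!: msum_mem simp: minface_mn)
      moreover have "z \<bullet> y = (\<Sum>j\<in>J. mn (P j) y)"
        using x by (auto simp: inner_sum_left minface_mn intro!: sum.cong)
      ultimately show "z \<in> minface (msum J P) y" by (simp add: minface_mn mneq)
    qed
  qed
qed

lemma msum_convex_hull:
  fixes S :: "'i \<Rightarrow> (real^'n) set"
  assumes "finite J"
  shows "msum J (\<lambda>j. convex hull (S j)) = convex hull (msum J S)"
  using assms by (simp add: msum_setsum convex_hull_set_sum)

lemma msum_finite:
  fixes S :: "'i \<Rightarrow> (real^'n) set"
  assumes "finite J" "\<And>j. j \<in> J \<Longrightarrow> finite (S j)"
  shows "finite (msum J S)"
proof -
  have "msum J S = (\<lambda>x. \<Sum>j\<in>J. x j) ` (PiE J S)"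
    unfolding msum_def
    apply (auto simp: image_iff)
    apply (rename_tac x, rule_tac x="restrict x J" in bexI, auto)
    done
  then show ?thesis using assms by (simp add: finite_PiE)
qed

lemma relint_prolong:
  fixes S :: "(real^'n) set"
  assumes "x \<in> rel_interior S" "y \<in> S"
  shows "\<exists>d>0. x + d *\<^sub>R (x - y) \<in> S"
proof (cases "y = x")
  case True then show ?thesis using assms rel_interior_subset by (intro exI[of _ 1]) auto
next
  case False
  obtain e where e: "e > 0" "cball x e \<inter> affine hull S \<subseteq> S"
    using assms(1) mem_rel_interior_cball by blast
  define d where "d = e / norm (x - y)"
  have nz: "norm (x - y) > 0" using False by simp
  have d: "d > 0" using nz e by (simp add: d_def)
  have eq: "x + d *\<^sub>R (x - y) = (1 + d) *\<^sub>R x + (-d) *\<^sub>R y" by (simp add: algebra_simps)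
  have "x \<in> S" using assms(1) rel_interior_subset by blast
  then have xa: "x \<in> affine hull S" by (rule hull_inc)
  have ya: "y \<in> affine hull S" using assms(2) by (rule hull_inc)
  have A: "x + d *\<^sub>R (x - y) \<in> affine hull S"
    unfolding eq by (rule mem_affine[OF affine_affine_hull xa ya]) simp
  have "dist x (x + d *\<^sub>R (x - y)) = d * norm (x - y)"
    using d by (simp add: dist_norm)
  also have "\<dots> = e" using nz by (simp add: d_def)
  finally have B: "x + d *\<^sub>R (x - y) \<in> cball x e" by simp
  from A B e(2) have "x + d *\<^sub>R (x - y) \<in> S" by blast
  then show ?thesis using d by blast
qed

lemma relint_by_functionals:
  fixes S :: "(real^'n) set"
  assumes "convex S" "x \<in> S"
    and H: "\<And>a. (\<forall>y\<in>S. a \<bullet> x \<le> a \<bullet> y) \<Longrightarrow> (\<forall>y\<in>S. a \<bullet> y = a \<bullet> x)"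
  shows "x \<in> rel_interior S"
proof (rule ccontr)
  assume "x \<notin> rel_interior S"
  then obtain a where a: "a \<noteq> 0" "\<And>y. y \<in> S \<Longrightarrow> a \<bullet> x \<le> a \<bullet> y"
    "\<And>y. y \<in> rel_interior S \<Longrightarrow> a \<bullet> x < a \<bullet> y"
    using supporting_hyperplane_rel_boundary[OF assms(1,2)] by metis
  obtain z where z: "z \<in> rel_interior S" using rel_interior_eq_empty assms by blast
  have zS: "z \<in> S" using z rel_interior_subset by blast
  have "\<forall>y\<in>S. a \<bullet> x \<le> a \<bullet> y" using a(2) by blast
  then have "a \<bullet> z = a \<bullet> x" using H[of a] zS by blast
  with a(3)[OF z] show False by simp
qed

lemma farkas:
  fixes A :: "(real^'n) set"
  assumes "finite A" and ny: "\<not>(\<exists>\<mu>. (\<forall>a\<in>A. \<mu> a \<ge> 0) \<and> y = (\<Sum>a\<in>A. \<mu> a *\<^sub>R a))"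
  shows "\<exists>u. (\<forall>a\<in>A. u \<bullet> a \<ge> 0) \<and> u \<bullet> y < 0"
proof (cases "A = {}")
  case True
  then have "y \<noteq> 0" using ny by auto
  then show ?thesis using True by (intro exI[of _ "-y"]) simp
next
  case False
  define C where "C = {z. \<exists>\<mu>. (\<forall>a\<in>A. \<mu> a \<ge> 0) \<and> z = (\<Sum>a\<in>A. \<mu> a *\<^sub>R a)}"
  have CH: "C = conic hull (convex hull A)"
  proof
    show "C \<subseteq> conic hull (convex hull A)"
    proof
      fix z assume "z \<in> C"
      then obtain \<mu> where mu: "\<forall>a\<in>A. \<mu> a \<ge> 0" "z = (\<Sum>a\<in>A. \<mu> a *\<^sub>R a)" by (auto simp: C_def)
      define s where "s = sum \<mu> A"
      have s0: "s \<ge> 0" unfolding s_def using mu by (simp add: sum_nonneg)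
      show "z \<in> conic hull (convex hull A)"
      proof (cases "s = 0")
        case True
        have nn: "\<And>a. a \<in> A \<Longrightarrow> 0 \<le> \<mu> a" using mu(1) by blast
        have "\<forall>a\<in>A. \<mu> a = 0" using sum_nonneg_eq_0_iff[OF assms(1), of \<mu>, OF nn] True s_def by simp
        then have "z = 0" using mu by simp
        obtain p where "p \<in> A" using False by blast
        then have "p \<in> convex hull A" by (rule hull_inc)
        then show ?thesis using \<open>z = 0\<close> by (auto simp: conic_hull_explicit intro!: exI[of _ 0] exI[of _ p])
      next
        case False
        then have sp: "s > 0" using s0 by simp
        have "(\<Sum>a\<in>A. (\<mu> a / s) *\<^sub>R a) \<in> convex hull A"
          unfolding convex_hull_finite[OF assms(1)]
          using mu sp by (auto simp: s_def[symmetric] sum_divide_distrib[symmetric] intro!: exI[of _ "\<lambda>a. \<mu> a / s"])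
        moreover have "z = s *\<^sub>R (\<Sum>a\<in>A. (\<mu> a / s) *\<^sub>R a)"
          using mu sp by (simp add: scaleR_sum_right)
        ultimately show ?thesis using s0 by (auto simp: conic_hull_explicit)
      qed
    qed
  next
    show "conic hull (convex hull A) \<subseteq> C"
    proof
      fix z assume "z \<in> conic hull (convex hull A)"
      then obtain c x where cx: "c \<ge> 0" "x \<in> convex hull A" "z = c *\<^sub>R x"
        by (auto simp: conic_hull_explicit)
      then obtain u where u: "\<forall>a\<in>A. 0 \<le> u a" "(\<Sum>a\<in>A. u a *\<^sub>R a) = x"
        unfolding convex_hull_finite[OF assms(1)] by auto
      show "z \<in> C" unfolding C_def
        using cx u by (auto simp: scaleR_sum_right intro!: exI[of _ "\<lambda>a. c * u a"])
    qed
  qed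
  have "polytope (convex hull A)" using assms(1) by (auto simp: polytope_def)
  then have clC: "closed C" unfolding CH by (intro closed_conic_hull_strong) simp
  have cvC: "convex C" unfolding CH by (intro convex_conic_hull convex_convex_hull)
  have yC: "y \<notin> C" using ny by (auto simp: C_def)
  obtain u b where ub: "u \<bullet> y < b" "\<forall>x\<in>C. u \<bullet> x > b"
    using separating_hyperplane_closed_point[OF cvC clC yC] by blast
  have "0 \<in> C" unfolding C_def by (auto intro!: exI[of _ "\<lambda>a. 0"])
  then have b0: "b < 0" using ub by auto
  have "u \<bullet> a \<ge> 0" if aA: "a \<in> A" for a
  proof (rule ccontr)
    assume neg: "\<not> u \<bullet> a \<ge> 0"
    define t where "t = b / (u \<bullet> a)"
    have tpos: "t \<ge> 0" using neg b0 by (simp add: t_def divide_nonpos_neg)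
    have "(\<Sum>a'\<in>A. (if a' = a then t else 0) *\<^sub>R a') = (\<Sum>a'\<in>A. if a' = a then t *\<^sub>R a else 0)"
      by (rule sum.cong) auto
    also have "\<dots> = t *\<^sub>R a" using aA assms(1) by simp
    finally have "(\<Sum>a'\<in>A. (if a' = a then t else 0) *\<^sub>R a') = t *\<^sub>R a" .
    then have "t *\<^sub>R a \<in> C" unfolding C_def using tpos
      by (auto intro!: exI[of _ "\<lambda>a'. if a' = a then t else 0"])
    then have "u \<bullet> (t *\<^sub>R a) > b" using ub by blast
    moreover have "u \<bullet> (t *\<^sub>R a) = b" using neg by (simp add: t_def)
    ultimately show False by simp
  qed
  then show ?thesis using ub b0 by (intro exI[of _ u]) auto
qed

lemma kkt:
  fixes H :: "((real^'n) \<times> real) set"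
  assumes fin: "finite H" and zin: "\<forall>(a,\<beta>)\<in>H. a \<bullet> z \<ge> \<beta>"
    and opt: "\<And>x. \<forall>(a,\<beta>)\<in>H. a \<bullet> x \<ge> \<beta> \<Longrightarrow> y \<bullet> z \<le> y \<bullet> x"
  shows "\<exists>\<mu>. (\<forall>a\<in>{a. \<exists>\<beta>. (a,\<beta>)\<in>H \<and> a \<bullet> z = \<beta>}. \<mu> a \<ge> 0) \<and>
              y = (\<Sum>a\<in>{a. \<exists>\<beta>. (a,\<beta>)\<in>H \<and> a \<bullet> z = \<beta>}. \<mu> a *\<^sub>R a)"
proof (rule ccontr)
  define A where "A = {a. \<exists>\<beta>. (a,\<beta>)\<in>H \<and> a \<bullet> z = \<beta>}"
  have finA: "finite A"
    by (rule finite_subset[of _ "fst ` H"]) (use fin in \<open>force simp: A_def image_iff\<close>)+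
  assume "\<not> ?thesis"
  then have "\<not>(\<exists>\<mu>. (\<forall>a\<in>A. \<mu> a \<ge> 0) \<and> y = (\<Sum>a\<in>A. \<mu> a *\<^sub>R a))" by (simp add: A_def)
  then obtain u where u: "\<forall>a\<in>A. u \<bullet> a \<ge> 0" "u \<bullet> y < 0" using farkas[OF finA] by blast
  have ev: "\<forall>\<^sub>F t in at_right (0::real). \<forall>h\<in>H. fst h \<bullet> (z + t *\<^sub>R u) \<ge> snd h"
  proof (rule eventually_ball_finite[OF fin], rule ballI)
    fix h assume hH: "h \<in> H"
    obtain a \<beta> where h: "h = (a, \<beta>)" by force
    show "\<forall>\<^sub>F t in at_right (0::real). fst h \<bullet> (z + t *\<^sub>R u) \<ge> snd h"
    proof (cases "a \<bullet> z = \<beta>")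
      case True
      then have "a \<in> A" using hH h by (auto simp: A_def)
      then have "u \<bullet> a \<ge> 0" using u by blast
      then have "a \<bullet> (z + t *\<^sub>R u) \<ge> \<beta>" if "t > 0" for t
        using True that by (simp add: inner_add_right inner_commute)
      then show ?thesis unfolding h using eventually_at_right_less[of 0]
        by (auto elim!: eventually_mono)
    next
      case False
      then have gt: "a \<bullet> z > \<beta>" using zin hH h by fastforce
      have "((\<lambda>t. a \<bullet> (z + t *\<^sub>R u)) \<longlongrightarrow> a \<bullet> (z + 0 *\<^sub>R u)) (at_right 0)"
        by (intro tendsto_intros)
      then have "\<forall>\<^sub>F t in at_right 0. \<beta> < a \<bullet> (z + t *\<^sub>R u)"
        using order_tendstoD(1) gt by simp
      then show ?thesis unfolding h by (auto elim!: eventually_mono)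
    qed
  qed
  moreover have "\<forall>\<^sub>F t in at_right (0::real). t > 0" by (simp add: eventually_at_right_less)
  ultimately have "\<forall>\<^sub>F t in at_right (0::real). t > 0 \<and> (\<forall>h\<in>H. fst h \<bullet> (z + t *\<^sub>R u) \<ge> snd h)"
    by (rule eventually_conj[rotated])
  then obtain t where t: "t > 0" "\<forall>h\<in>H. fst h \<bullet> (z + t *\<^sub>R u) \<ge> snd h"
    using eventually_happens' trivial_limit_at_right_real by blast
  have "\<forall>(a,\<beta>)\<in>H. a \<bullet> (z + t *\<^sub>R u) \<ge> \<beta>" using t(2) by auto
  then have "y \<bullet> z \<le> y \<bullet> (z + t *\<^sub>R u)" by (rule opt)
  moreover have "y \<bullet> (z + t *\<^sub>R u) < y \<bullet> z"
    using t(1) u(2) by (simp add: inner_add_right inner_commute mult_pos_neg)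
  ultimately show False by simp
qed

lemma face_tilt:
  fixes S :: "(real^'n) set"
  assumes fin: "finite S" and p: "p \<in> convex hull S" and pmin: "\<forall>q\<in>convex hull S. p \<bullet> v \<le> q \<bullet> v"
    and face: "\<forall>q\<in>convex hull S. q \<bullet> v = p \<bullet> v \<longrightarrow> u \<bullet> p \<le> u \<bullet> q"
  shows "\<exists>t. \<forall>q\<in>convex hull S. (u + t *\<^sub>R v) \<bullet> p \<le> (u + t *\<^sub>R v) \<bullet> q"
proof -
  define tm where "tm s = (if s \<bullet> v > p \<bullet> v then \<bar>u \<bullet> p - u \<bullet> s\<bar> / (s \<bullet> v - p \<bullet> v) else 0)" for s
  define t where "t = (\<Sum>s\<in>S. tm s)"
  have tnn: "\<And>s. tm s \<ge> 0" by (simp add: tm_def)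
  have "(u + t *\<^sub>R v) \<bullet> p \<le> (u + t *\<^sub>R v) \<bullet> s" if sS: "s \<in> S" for s
  proof -
    have sh: "s \<in> convex hull S" using sS by (rule hull_inc)
    have tge: "t \<ge> tm s" unfolding t_def by (rule member_le_sum[OF sS]) (use tnn fin in auto)
    show ?thesis
    proof (cases "s \<bullet> v > p \<bullet> v")
      case True
      have "t * (s \<bullet> v - p \<bullet> v) \<ge> tm s * (s \<bullet> v - p \<bullet> v)"
        using tge True by (intro mult_right_mono) auto
      also have "tm s * (s \<bullet> v - p \<bullet> v) = \<bar>u \<bullet> p - u \<bullet> s\<bar>" using True by (simp add: tm_def)
      finally have "t * (s \<bullet> v - p \<bullet> v) \<ge> u \<bullet> p - u \<bullet> s" by linarith
      then show ?thesis by (simp add: inner_add_left algebra_simps inner_commute)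
    next
      case False
      then have "s \<bullet> v = p \<bullet> v" using pmin sh by force
      then have "u \<bullet> p \<le> u \<bullet> s" using face sh by blast
      then show ?thesis using \<open>s \<bullet> v = p \<bullet> v\<close> by (simp add: inner_add_left inner_commute[of v])
    qed
  qed
  then have "S \<subseteq> {q. (u + t *\<^sub>R v) \<bullet> q \<ge> (u + t *\<^sub>R v) \<bullet> p}" by auto
  then have "convex hull S \<subseteq> {q. (u + t *\<^sub>R v) \<bullet> q \<ge> (u + t *\<^sub>R v) \<bullet> p}"
    by (rule hull_minimal) (rule convex_halfspace_ge)
  then show ?thesis by blast
qed

lemma support_nonint:
  fixes S :: "(real^'n) set"
  assumes cv: "convex S" and xS: "x \<in> S" and xi: "x \<notin> interior S"
  shows "\<exists>a. a \<noteq> 0 \<and> (\<forall>y\<in>S. a \<bullet> x \<le> a \<bullet> y)"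
proof (cases "x \<in> rel_interior S")
  case False
  then show ?thesis using supporting_hyperplane_rel_boundary[OF cv xS] by metis
next
  case True
  have "affine hull S \<noteq> UNIV" using True xi rel_interior_interior by blast
  then have ne: "aff_dim S \<noteq> int DIM(real^'n)" using aff_dim_eq_full by blast
  have "x \<in> affine hull S" using xS by (rule hull_inc)
  then have ad: "aff_dim S = int (dim ((\<lambda>y. y - x) ` S))" by (rule aff_dim_eq_dim_subtract)
  have "aff_dim S \<le> int DIM(real^'n)" by (rule aff_dim_le_DIM)
  then have "dim ((\<lambda>y. y - x) ` S) < DIM(real^'n)" using ne ad by linarith
  then obtain a where a: "a \<noteq> 0" "\<And>y. y \<in> span ((\<lambda>y. y - x) ` S) \<Longrightarrow> orthogonal a y"
    using orthogonal_to_subspace_exists by blast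
  have "a \<bullet> x \<le> a \<bullet> y" if "y \<in> S" for y
  proof -
    have "y - x \<in> span ((\<lambda>y. y - x) ` S)" using that by (intro span_base) auto
    then have "a \<bullet> (y - x) = 0" using a(2) by (simp add: orthogonal_def)
    then show ?thesis by (simp add: inner_diff_right)
  qed
  then show ?thesis using a(1) by blast
qed

lemma lattice_inner_int:
  assumes "lattice_pt (x::real^'n)" "lattice_pt y"
  shows "x \<bullet> y \<in> \<int>"
  using assms unfolding lattice_pt_def inner_vec_def by (auto intro!: Ints_sum Ints_mult)

lemma min_hull_gen:
  fixes S :: "(real^'n) set"
  assumes "finite S" "S \<noteq> {}"
  shows "\<exists>s\<in>S. \<forall>q\<in>convex hull S. s \<bullet> y \<le> q \<bullet> y"
proof -
  define m where "m = Min ((\<lambda>s. s \<bullet> y) ` S)"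
  have "m \<in> (\<lambda>s. s \<bullet> y) ` S" unfolding m_def using assms by (intro Min_in) auto
  then obtain s where s: "s \<in> S" "s \<bullet> y = m" by auto
  have "\<forall>s'\<in>S. m \<le> s' \<bullet> y" using assms by (auto simp: m_def)
  then have "S \<subseteq> {q. q \<bullet> y \<ge> m}" by auto
  then have "convex hull S \<subseteq> {q. q \<bullet> y \<ge> m}"
    by (rule hull_minimal) (simp add: convex_halfspace_ge[of m y, simplified inner_commute] inner_commute)
  then show ?thesis using s by auto
qed

lemma prim_scale:
  fixes e1 e2 :: "real^'n"
  assumes p1: "primitive e1" and p2: "primitive e2" and eq: "e2 = c *\<^sub>R e1" and c: "c > 0"
  shows "c = 1"
proof -
  have l1: "lattice_pt e1" "e1 \<noteq> 0" and l2: "lattice_pt e2" using p1 p2 by (auto simp: primitive_def)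
  obtain l where l: "e1 $ l \<noteq> 0" using l1(2) by (metis vec_eq_iff zero_index)
  have "c = e2 $ l / e1 $ l" using eq l by simp
  moreover have "e2 $ l \<in> \<rat>" "e1 $ l \<in> \<rat>" using l1 l2 by (auto simp: lattice_pt_def Ints_subset_Rats[THEN subsetD])
  ultimately have "c \<in> \<rat>" by simp
  then obtain a b :: int where ab: "b > 0" "coprime a b" "c = of_int a / of_int b" by (rule Rats_cases')
  have a0: "a > 0" using ab c by (simp add: zero_less_divide_iff)
  have "\<forall>m. \<exists>z::int. e1 $ m = of_int z" using l1 by (auto simp: lattice_pt_def elim!: Ints_cases)
  then obtain E1 where E1: "\<And>m. e1 $ m = of_int (E1 m)" by metis
  have "\<forall>m. \<exists>z::int. e2 $ m = of_int z" using l2 by (auto simp: lattice_pt_def elim!: Ints_cases)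
  then obtain E2 where E2: "\<And>m. e2 $ m = of_int (E2 m)" by metis
  have rel: "b * E2 m = a * E1 m" for m
  proof -
    have "e2 $ m = c * e1 $ m" using eq by simp
    then have "of_int b * e2 $ m = of_int a * e1 $ m" using ab by (simp add: field_simps)
    then have "real_of_int (b * E2 m) = real_of_int (a * E1 m)" using E1 E2 by simp
    then show ?thesis by linarith
  qed
  have bd: "b dvd E1 m" for m
  proof -
    have "b dvd a * E1 m" using rel[of m] by (metis dvd_triv_left)
    then show ?thesis using ab(2) by (simp add: coprime_commute coprime_dvd_mult_right_iff)
  qed
  have ad: "a dvd E2 m" for m
  proof -
    have "a dvd b * E2 m" using rel[of m] by (metis dvd_triv_left)
    then show ?thesis using ab(2) by (simp add: coprime_dvd_mult_right_iff)
  qed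
  define u1 where "u1 = (\<chi> m. real_of_int (E1 m div b))"
  define u2 where "u2 = (\<chi> m. real_of_int (E2 m div a))"
  have "lattice_pt u1" "lattice_pt u2" by (auto simp: lattice_pt_def u1_def u2_def)
  moreover have "e1 = of_int b *\<^sub>R u1"
    unfolding vec_eq_iff using bd by (auto simp: u1_def E1 simp flip: of_int_mult)
  moreover have "e2 = of_int a *\<^sub>R u2"
    unfolding vec_eq_iff using ad by (auto simp: u2_def E2 simp flip: of_int_mult)
  ultimately have "b = 1" "a = 1" using p1 p2 ab(1) a0 unfolding primitive_def by auto
  then show ?thesis using ab by simp
qed

lemma facet_normals_finite:
  fixes D :: "(real^'n) set"
  assumes "reflexive D"
  shows "finite (facet_normals D)"
proof -
  obtain T where T: "finite T" "D = convex hull T"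
    using assms by (auto simp: reflexive_def lattice_polytope_def)
  have pD: "polytope D" using T by (auto simp: polytope_def)
  have cD: "compact D" using T by (simp add: finite_imp_compact_convex_hull)
  have adD: "aff_dim D = int CARD('n)" using assms by (simp add: reflexive_def)
  have inj: "inj_on (\<lambda>e. minface D e) (facet_normals D)"
  proof (rule inj_onI)
    fix e1 e2 assume e1: "e1 \<in> facet_normals D" and e2: "e2 \<in> facet_normals D"
      and same: "minface D e1 = minface D e2"
    define Fc where "Fc = minface D e1"
    have fac: "Fc facet_of D" using e1 by (simp add: facet_normals_def Fc_def)
    then have Fne: "Fc \<noteq> {}" and adF: "aff_dim Fc = aff_dim D - 1" and FD: "Fc \<subseteq> D"
      by (auto simp: facet_of_def face_of_imp_subset)
    obtain p where pF: "p \<in> Fc" using Fne by blast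
    have const: "q \<bullet> e = p \<bullet> e" if "q \<in> Fc" "e \<in> {e1, e2}" for q e
    proof -
      have "q \<in> minface D e \<and> p \<in> minface D e" using that pF same by (auto simp: Fc_def)
      then show ?thesis by (auto simp: minface_def)
    qed
    define Tr where "Tr = (\<lambda>x. x - p) ` Fc"
    have "p \<in> affine hull Fc" using pF by (rule hull_inc)
    then have "aff_dim Fc = int (dim Tr)" unfolding Tr_def by (rule aff_dim_eq_dim_subtract)
    then have dimT: "dim Tr + 1 = CARD('n)" using adF adD by linarith
    define Oc where "Oc = {y \<in> UNIV. \<forall>x \<in> span Tr. orthogonal x y}"
    have "dim Oc + dim (span Tr) = dim (UNIV :: (real^'n) set)"
      unfolding Oc_def by (rule dim_subspace_orthogonal_to_vectors) auto
    then have dimO: "dim Oc = 1" using dimT by (simp add: dim_span)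
    have inO: "e \<in> Oc" if "e \<in> {e1, e2}" for e
    proof -
      have "orthogonal t e" if "t \<in> Tr" for t
        using that const[OF _ \<open>e \<in> {e1,e2}\<close>] by (auto simp: Tr_def orthogonal_def inner_diff_left)
      then have "orthogonal x e" if "x \<in> span Tr" for x
        using orthogonal_to_span[OF that, of e] by (simp add: orthogonal_commute)
      then show ?thesis by (simp add: Oc_def)
    qed
    have subO: "subspace Oc" unfolding Oc_def by (auto simp: subspace_def orthogonal_clauses)
    have ne1: "e1 \<noteq> 0" "e2 \<noteq> 0" using e1 e2 by (auto simp: facet_normals_def primitive_def)
    define c where "c = (e2 \<bullet> e1) / (e1 \<bullet> e1)"
    define wv where "wv = e2 - c *\<^sub>R e1"
    have wO: "wv \<in> Oc" unfolding wv_def using inO subO by (auto intro: subspace_diff subspace_scale)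
    have worth: "e1 \<bullet> wv = 0" using ne1 by (simp add: wv_def c_def inner_diff_right inner_commute)
    have w0: "wv = 0"
    proof (rule ccontr)
      assume "wv \<noteq> 0"
      then have "independent {e1, wv}" using worth ne1
        by (intro pairwise_orthogonal_independent) (auto simp: pairwise_def orthogonal_def inner_commute)
      moreover have "card {e1, wv} = 2"
      proof -
        have "e1 \<noteq> wv"
        proof
          assume "e1 = wv"
          then have "e1 \<bullet> e1 = 0" using worth by simp
          then show False using ne1 by simp
        qed
        then show ?thesis by simp
      qed
      moreover have "{e1, wv} \<subseteq> Oc" using inO wO by auto
      ultimately have "2 \<le> dim Oc" by (metis independent_card_le_dim)
      then show False using dimO by simp
    qed
    then have e2c: "e2 = c *\<^sub>R e1" by (simp add: wv_def)
    have "Fc \<noteq> D" using adF by auto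
    then obtain x where x: "x \<in> D" "x \<notin> Fc" using FD by blast
    have cD': "D \<noteq> {}" using x by auto
    have "x \<bullet> e1 > p \<bullet> e1"
    proof -
      have "p \<bullet> e1 \<le> x \<bullet> e1" using pF x(1) minface_iff[OF cD cD'] by (auto simp: Fc_def)
      moreover have "x \<bullet> e1 \<noteq> p \<bullet> e1"
        using x pF by (auto simp: Fc_def minface_def)
      ultimately show ?thesis by simp
    qed
    moreover have "x \<bullet> e2 > p \<bullet> e2"
    proof -
      have pF2: "p \<in> minface D e2" using pF same by (simp add: Fc_def)
      have "p \<bullet> e2 \<le> x \<bullet> e2" using pF2 x(1) minface_iff[OF cD cD'] by auto
      moreover have "x \<bullet> e2 \<noteq> p \<bullet> e2"
        using x pF2 same by (auto simp: Fc_def minface_def)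
      ultimately show ?thesis by simp
    qed
    ultimately have "c > 0" using e2c
      by (simp add: inner_diff_left) (metis diff_gt_0_iff_gt zero_less_mult_pos2 inner_diff_left inner_scaleR_right)
    then have "c = 1" using prim_scale[of e1 e2 c] e1 e2 e2c by (auto simp: facet_normals_def)
    then show "e1 = e2" using e2c by simp
  qed
  have "(\<lambda>e. minface D e) ` facet_normals D \<subseteq> {F. F facet_of D}"
    by (auto simp: facet_normals_def)
  then have "finite ((\<lambda>e. minface D e) ` facet_normals D)"
    using finite_polytope_facets[OF pD] finite_subset by blast
  then show ?thesis using finite_imageD inj by blast
qed

lemma msum_cong:
  assumes "\<And>j. j \<in> J \<Longrightarrow> P j = P' j"
  shows "msum J P = msum J P'"
  using assms unfolding msum_def by auto

lemma msum_zero_outside: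
  fixes P :: "'i \<Rightarrow> (real^'n) set"
  assumes "finite I" "J \<subseteq> I" "\<And>l. l \<in> I - J \<Longrightarrow> P l = {0}"
  shows "msum I P = msum J P"
proof
  show "msum I P \<subseteq> msum J P"
  proof
    fix y assume "y \<in> msum I P"
    then obtain x where x: "\<And>j. j \<in> I \<Longrightarrow> x j \<in> P j" "y = (\<Sum>j\<in>I. x j)" by (rule msum_elim) blast
    have "(\<Sum>j\<in>I. x j) = (\<Sum>j\<in>J. x j)"
      using assms x(1) by (intro sum.mono_neutral_right) auto
    then show "y \<in> msum J P" using x assms(2) by (auto intro!: msum_mem)
  qed
next
  show "msum J P \<subseteq> msum I P"
  proof
    fix y assume "y \<in> msum J P"
    then obtain x where x: "\<And>j. j \<in> J \<Longrightarrow> x j \<in> P j" "y = (\<Sum>j\<in>J. x j)" by (rule msum_elim) blast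
    define x' where "x' j = (if j \<in> J then x j else 0)" for j
    have "(\<Sum>j\<in>I. x' j) = (\<Sum>j\<in>J. x' j)"
      using assms by (intro sum.mono_neutral_right) (auto simp: x'_def)
    also have "\<dots> = y" using x by (simp add: x'_def)
    finally have "y = (\<Sum>j\<in>I. x' j)" by simp
    moreover have "\<And>j. j \<in> I \<Longrightarrow> x' j \<in> P j" using x assms by (auto simp: x'_def)
    ultimately show "y \<in> msum I P" by (auto intro!: msum_mem)
  qed
qed

lemma msum_single: "msum {j} P = P j"
  unfolding msum_def by auto

locale nefctx =
  fixes D :: "(real^'n) set" and r :: nat and Ds :: "nat \<Rightarrow> (real^'n) set"
  assumes nef: "nef_partition D r Ds"
begin

abbreviation "E \<equiv> facet_normals D"
abbreviation "Nb \<equiv> nabla D Ds"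
abbreviation "II \<equiv> {1..r}"

lemma refl: "reflexive D" using nef unfolding nef_partition_def by blast

lemma D_H: "D = {x. \<forall>e\<in>E. x \<bullet> e \<ge> -1}"
  using refl unfolding reflexive_def by (elim conjE)

lemma finE: "finite E" using facet_normals_finite[OF refl] .

lemma E_lat: "e \<in> E \<Longrightarrow> lattice_pt e" and E_nz: "e \<in> E \<Longrightarrow> e \<noteq> 0"
  by (auto simp: facet_normals_def primitive_def)

lemma D_hull: "\<exists>T. finite T \<and> D = convex hull T"
  using refl by (auto simp: reflexive_def lattice_polytope_def)

lemma D_compact: "compact D" and D_convex: "convex D"
  using D_hull finite_imp_compact_convex_hull by auto

lemma D_adim: "aff_dim D = int CARD('n)" using refl by (simp add: reflexive_def)

lemma D_ne: "D \<noteq> {}"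
proof
  assume "D = {}"
  then have "aff_dim D = -1" by simp
  then show False using D_adim by simp
qed

lemma D_sum: "D = msum II Ds" using nef unfolding nef_partition_def by blast

definition S where "S j = (SOME T. finite T \<and> Ds j = convex hull T)"

lemma S_props: assumes "j \<in> II" shows "finite (S j)" "Ds j = convex hull (S j)"
proof -
  have "\<exists>T. finite T \<and> Ds j = convex hull T"
    using nef assms unfolding nef_partition_def lattice_polytope_def by blast
  then have "finite (S j) \<and> Ds j = convex hull (S j)" unfolding S_def by (rule someI_ex)
  then show "finite (S j)" "Ds j = convex hull (S j)" by auto
qed

lemma Ds_compact: "j \<in> II \<Longrightarrow> compact (Ds j)"
  using S_props finite_imp_compact_convex_hull by metis

lemma Ds_convex: "j \<in> II \<Longrightarrow> convex (Ds j)"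
  using S_props convex_convex_hull by metis

lemma Ds_ne: assumes "j \<in> II" shows "Ds j \<noteq> {}"
proof
  assume "Ds j = {}"
  then have "msum II Ds = {}" using assms by (auto simp: msum_def)
  then show False using D_sum D_ne by simp
qed

lemma Ds_cn: "j \<in> II \<Longrightarrow> compact (Ds j) \<and> Ds j \<noteq> {}"
  using Ds_compact Ds_ne by blast

lemma ph01: "j \<in> II \<Longrightarrow> e \<in> E \<Longrightarrow> phi (Ds j) e = 0 \<or> phi (Ds j) e = 1"
  using nef unfolding nef_partition_def by blast

lemma Ds_lower: "j \<in> II \<Longrightarrow> x \<in> Ds j \<Longrightarrow> x \<bullet> y \<ge> - phi (Ds j) y"
  using mn_props(2)[OF Ds_compact Ds_ne] by (simp add: phi_mn)

lemma D_ball: "\<exists>\<rho>>0. ball 0 \<rho> \<subseteq> D"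
proof -
  define M where "M = 1 + (\<Sum>e\<in>E. norm e)"
  have M1: "M \<ge> 1" by (simp add: M_def sum_nonneg)
  define \<rho> where "\<rho> = 1 / M"
  have rho: "\<rho> > 0" using M1 by (simp add: \<rho>_def)
  have "x \<in> D" if "x \<in> ball 0 \<rho>" for x
  proof -
    have nx: "norm x < \<rho>" using that by simp
    have "x \<bullet> e \<ge> -1" if eE: "e \<in> E" for e
    proof -
      have "norm e \<le> (\<Sum>e\<in>E. norm e)" using eE finE by (intro member_le_sum) auto
      then have ne: "norm e \<le> M" by (simp add: M_def)
      have "\<bar>x \<bullet> e\<bar> \<le> norm x * norm e" by (rule Cauchy_Schwarz_ineq2)
      also have "\<dots> \<le> norm x * M" using ne by (simp add: mult_left_mono)
      also have "\<dots> \<le> \<rho> * M" using nx M1 by (intro mult_right_mono) auto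
      also have "\<dots> = 1" using M1 by (simp add: \<rho>_def)
      finally show ?thesis by linarith
    qed
    then show ?thesis by (subst D_H) auto
  qed
  then show ?thesis using rho by blast
qed

lemma ray_zero:
  assumes "\<forall>e\<in>E. w \<bullet> e \<ge> 0"
  shows "w = 0"
proof (rule ccontr)
  assume w0: "w \<noteq> 0"
  obtain M where M: "\<And>x. x \<in> D \<Longrightarrow> norm x \<le> M"
    using compact_imp_bounded[OF D_compact] by (auto simp: bounded_iff)
  define t where "t = (\<bar>M\<bar> + 1) / norm w"
  have tpos: "t > 0" using w0 by (simp add: t_def)
  have "t *\<^sub>R w \<in> D"
    using assms tpos by (subst D_H) (auto intro: order_trans[of _ 0] simp: mult_nonneg_nonneg)
  then have "norm (t *\<^sub>R w) \<le> M" by (rule M)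
  moreover have "norm (t *\<^sub>R w) = \<bar>M\<bar> + 1" using w0 tpos by (simp add: t_def)
  ultimately show False by simp
qed

lemma phsum: assumes eE: "e \<in> E" shows "(\<Sum>j\<in>II. phi (Ds j) e) = 1"
proof -
  have mnD: "mn D e = (\<Sum>j\<in>II. mn (Ds j) e)"
    using msum_mn_minface(1)[of II Ds e] Ds_cn D_sum by simp
  obtain p where p: "p \<in> D" "mn D e = p \<bullet> e" using mn_props(1)[OF D_compact D_ne] by blast
  have ge: "mn D e \<ge> -1" using p eE D_H by auto
  obtain \<rho> where rho: "\<rho> > 0" "ball 0 \<rho> \<subseteq> D" using D_ball by blast
  define x where "x = (- (\<rho> / 2) / norm e) *\<^sub>R e"
  have nz: "norm e > 0" using E_nz[OF eE] by simp
  have "norm x = \<rho> / 2" using nz rho by (simp add: x_def)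
  then have "x \<in> D" using rho by auto
  then have "mn D e \<le> x \<bullet> e" using mn_props(2)[OF D_compact D_ne] by blast
  also have "x \<bullet> e = - (\<rho> / 2) * norm e"
    using nz by (simp add: x_def power2_norm_eq_inner[symmetric] power2_eq_square)
  also have "\<dots> < 0" using rho nz by (simp add: mult_pos_pos)
  finally have lt: "mn D e < 0" .
  have s: "(\<Sum>j\<in>II. phi (Ds j) e) = - mn D e" using mnD by (simp add: phi_mn sum_negf)
  have "(\<Sum>j\<in>II. phi (Ds j) e) \<in> \<int>"
    using ph01 eE by (intro Ints_sum) (metis Ints_0 Ints_1)
  then obtain z :: int where z: "(\<Sum>j\<in>II. phi (Ds j) e) = of_int z" by (rule Ints_cases)
  have "(0::real) < of_int z" "of_int z \<le> (1::real)" using s z ge lt by auto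
  then have "z = 1" by linarith
  then show ?thesis using z by simp
qed

lemma ph_ind: assumes eE: "e \<in> E"
  shows "\<exists>k\<in>II. \<forall>j\<in>II. phi (Ds j) e = (if j = k then 1 else 0)"
proof -
  have nn: "\<And>j. j \<in> II \<Longrightarrow> phi (Ds j) e \<ge> 0" using ph01[OF _ eE] by force
  have "\<exists>k\<in>II. phi (Ds k) e = 1"
  proof (rule ccontr)
    assume "\<not> ?thesis"
    then have "\<forall>j\<in>II. phi (Ds j) e = 0" using ph01[OF _ eE] by blast
    then show False using phsum[OF eE] by simp
  qed
  then obtain k where k: "k \<in> II" "phi (Ds k) e = 1" by blast
  have "phi (Ds j) e = 0" if j: "j \<in> II" "j \<noteq> k" for j
  proof -
    have "(\<Sum>j\<in>II. phi (Ds j) e) = phi (Ds k) e + (\<Sum>j\<in>II - {k}. phi (Ds j) e)"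
      using k(1) by (simp add: sum.remove)
    moreover have "phi (Ds j) e \<le> (\<Sum>j\<in>II - {k}. phi (Ds j) e)"
      using j nn by (intro member_le_sum) auto
    ultimately have "phi (Ds j) e \<le> 0" using phsum[OF eE] k by simp
    then show ?thesis using nn[OF j(1)] by simp
  qed
  then show ?thesis using k by (intro bexI[of _ k]) auto
qed

definition Egen where "Egen j = {e \<in> E. phi (Ds j) e = 1}"

lemma Nb_def': "Nb j = convex hull (insert 0 (Egen j))"
  by (simp add: nabla_def Egen_def)

lemma Egen_finite: "finite (insert 0 (Egen j))" using finE by (simp add: Egen_def)

lemma Nb_compact: "compact (Nb j)"
  unfolding Nb_def' using Egen_finite[of j] by (rule finite_imp_compact_convex_hull)

lemma Nb_convex: "convex (Nb j)"
  unfolding Nb_def' by (rule convex_convex_hull)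

lemma Nb_0: "0 \<in> Nb j"
  unfolding Nb_def' by (rule hull_inc) simp

lemma Nb_ne: "Nb j \<noteq> {}" using Nb_0 by blast

lemma Nb_cn: "compact (Nb j) \<and> Nb j \<noteq> {}" using Nb_compact Nb_ne by blast

lemma Egen_Nb: "e \<in> Egen j \<Longrightarrow> e \<in> Nb j"
  unfolding Nb_def' by (rule hull_inc) simp

lemma Egen_ph: assumes "e \<in> Egen k" "k \<in> II" "j \<in> II"
  shows "phi (Ds j) e = (if j = k then 1 else 0)"
proof -
  have eE: "e \<in> E" and pk: "phi (Ds k) e = 1" using assms by (auto simp: Egen_def)
  obtain k0 where k0: "k0 \<in> II" "\<forall>j\<in>II. phi (Ds j) e = (if j = k0 then 1 else 0)"
    using ph_ind[OF eE] by blast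
  have "k0 = k" using k0 pk assms(2) by (metis zero_neq_one)
  then show ?thesis using k0 assms(3) by simp
qed

lemma pairing:
  assumes j: "j \<in> II" and k: "k \<in> II" and x: "x \<in> Ds j" and y: "y \<in> Nb k"
  shows "x \<bullet> y \<ge> -(if j = k then 1 else 0)"
proof -
  have "insert 0 (Egen k) \<subseteq> {y. x \<bullet> y \<ge> -(if j = k then 1 else 0)}"
  proof
    fix e assume "e \<in> insert 0 (Egen k)"
    then show "e \<in> {y. x \<bullet> y \<ge> -(if j = k then 1 else 0)}"
    proof
      assume "e = 0" then show ?thesis by simp
    next
      assume eg: "e \<in> Egen k"
      have "x \<bullet> e \<ge> - phi (Ds j) e" by (rule Ds_lower[OF j x])
      then show ?thesis using Egen_ph[OF eg k j] by simp
    qed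
  qed
  then have "Nb k \<subseteq> {y. x \<bullet> y \<ge> -(if j = k then 1 else 0)}"
    unfolding Nb_def' by (rule hull_minimal) (rule convex_halfspace_ge)
  then show ?thesis using y by blast
qed

end

context nefctx
begin

lemma Hrep:
  assumes cnn: "\<forall>j\<in>II. c j \<ge> 0"
  shows "msum II (\<lambda>j. (\<lambda>x. c j *\<^sub>R x) ` Ds j) = {x. \<forall>e\<in>E. x \<bullet> e \<ge> -(\<Sum>j\<in>II. c j * phi (Ds j) e)}"
    (is "?L = ?R")
proof
  show "?L \<subseteq> ?R"
  proof
    fix x assume "x \<in> ?L"
    then obtain x' where x': "\<And>j. j \<in> II \<Longrightarrow> x' j \<in> (\<lambda>x. c j *\<^sub>R x) ` Ds j" "x = (\<Sum>j\<in>II. x' j)"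
      by (rule msum_elim) blast
    have "\<forall>j\<in>II. \<exists>z. z \<in> Ds j \<and> x' j = c j *\<^sub>R z" using x'(1) by blast
    then obtain z where z: "\<And>j. j \<in> II \<Longrightarrow> z j \<in> Ds j \<and> x' j = c j *\<^sub>R z j" by metis
    have "x \<bullet> e \<ge> -(\<Sum>j\<in>II. c j * phi (Ds j) e)" if "e \<in> E" for e
    proof -
      have "x \<bullet> e = (\<Sum>j\<in>II. c j * (z j \<bullet> e))" using z x'(2) by (simp add: inner_sum_left)
      also have "\<dots> \<ge> (\<Sum>j\<in>II. c j * (- phi (Ds j) e))"
        using z cnn Ds_lower by (intro sum_mono mult_left_mono) auto
      finally show ?thesis by (simp add: sum_negf)
    qed
    then show "x \<in> ?R" by simp
  qed
next
  show "?R \<subseteq> ?L"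
  proof
    fix x assume xR: "x \<in> ?R"
    have LH: "?L = convex hull (msum II (\<lambda>j. (\<lambda>x. c j *\<^sub>R x) ` S j))"
    proof -
      have "?L = msum II (\<lambda>j. convex hull ((\<lambda>x. c j *\<^sub>R x) ` S j))"
        by (rule msum_cong) (simp add: convex_hull_scaling S_props)
      also have "\<dots> = convex hull (msum II (\<lambda>j. (\<lambda>x. c j *\<^sub>R x) ` S j))"
        by (rule msum_convex_hull) simp
      finally show ?thesis .
    qed
    have fin: "finite (msum II (\<lambda>j. (\<lambda>x. c j *\<^sub>R x) ` S j))"
      by (rule msum_finite) (auto simp: S_props)
    have clL: "closed ?L" and cvL: "convex ?L" unfolding LH
      using fin finite_imp_compact_convex_hull compact_imp_closed by auto
    show "x \<in> ?L"
    proof (rule ccontr)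
      assume xL: "x \<notin> ?L"
      obtain a b where ab: "a \<bullet> x < b" "\<forall>p\<in>?L. a \<bullet> p > b"
        using separating_hyperplane_closed_point[OF cvL clL xL] by blast
      obtain z where z: "z \<in> D" "mn D a = z \<bullet> a" using mn_props(1)[OF D_compact D_ne] by blast
      have zmin: "\<And>q. q \<in> D \<Longrightarrow> a \<bullet> z \<le> a \<bullet> q"
        using mn_props(2)[OF D_compact D_ne] z(2) by (metis inner_commute)
      define H where "H = (\<lambda>e. (e, -1::real)) ` E"
      have finH: "finite H" using finE by (simp add: H_def)
      have zE: "\<forall>e\<in>E. z \<bullet> e \<ge> -1" using z(1) by (subst (asm) D_H) simp
      have zin: "\<forall>(e,\<beta>)\<in>H. e \<bullet> z \<ge> \<beta>" using zE by (auto simp: H_def inner_commute)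
      have opt: "a \<bullet> z \<le> a \<bullet> q" if "\<forall>(e,\<beta>)\<in>H. e \<bullet> q \<ge> \<beta>" for q
      proof -
        have "q \<in> D" using that by (subst D_H) (auto simp: H_def inner_commute)
        then show ?thesis by (rule zmin)
      qed
      define A where "A = {e. \<exists>\<beta>. (e,\<beta>)\<in>H \<and> e \<bullet> z = \<beta>}"
      obtain \<mu> where mu: "\<forall>e\<in>A. \<mu> e \<ge> 0" "a = (\<Sum>e\<in>A. \<mu> e *\<^sub>R e)"
        using kkt[OF finH zin opt] unfolding A_def by blast
      have AE: "A \<subseteq> E" and Aact: "\<And>e. e \<in> A \<Longrightarrow> e \<bullet> z = -1" by (auto simp: A_def H_def)
      have finA: "finite A" using AE finE finite_subset by blast
      obtain zz where zz: "\<And>j. j \<in> II \<Longrightarrow> zz j \<in> Ds j" "z = (\<Sum>j\<in>II. zz j)"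
        using msum_elim[of z II Ds] z(1) D_sum by auto
      have zze: "zz j \<bullet> e = - phi (Ds j) e" if "e \<in> A" "j \<in> II" for e j
      proof -
        have eE: "e \<in> E" using that AE by blast
        have "(\<Sum>j\<in>II. zz j \<bullet> e) = z \<bullet> e" using zz(2) by (simp add: inner_sum_left)
        also have "\<dots> = -1" using Aact[OF that(1)] by (simp add: inner_commute)
        also have "\<dots> = (\<Sum>j\<in>II. - phi (Ds j) e)" using phsum[OF eE] by (simp add: sum_negf)
        finally have "(\<Sum>j\<in>II. zz j \<bullet> e) = (\<Sum>j\<in>II. - phi (Ds j) e)" .
        then show ?thesis
          using sum_eq_le_imp_eq[of II "\<lambda>j. - phi (Ds j) e" "\<lambda>j. zz j \<bullet> e" j] Ds_lower zz(1) that(2)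
          by auto
      qed
      define zc where "zc = (\<Sum>j\<in>II. c j *\<^sub>R zz j)"
      have zcL: "zc \<in> ?L" unfolding zc_def by (rule msum_mem) (use zz in auto)
      have "a \<bullet> zc = (\<Sum>j\<in>II. c j * (\<Sum>e\<in>A. \<mu> e * (e \<bullet> zz j)))"
        by (simp add: zc_def mu(2) inner_sum_left inner_sum_right)
      also have "\<dots> = (\<Sum>j\<in>II. c j * (\<Sum>e\<in>A. \<mu> e * (- phi (Ds j) e)))"
        using zze by (intro sum.cong refl arg_cong2[where f="(*)"]) (auto simp: inner_commute)
      also have "\<dots> = (\<Sum>e\<in>A. \<mu> e * (-(\<Sum>j\<in>II. c j * phi (Ds j) e)))"
        by (simp add: sum_distrib_left sum_negf algebra_simps) (rule sum.swap)
      also have "\<dots> \<le> (\<Sum>e\<in>A. \<mu> e * (x \<bullet> e))"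
        using mu(1) xR AE by (intro sum_mono mult_left_mono) auto
      also have "\<dots> = a \<bullet> x" by (simp add: mu(2) inner_sum_right inner_commute)
      finally have "a \<bullet> zc \<le> a \<bullet> x" .
      then show False using ab zcL by force
    qed
  qed
qed

lemma Q_H:
  assumes JI: "J \<subseteq> II"
  shows "msum J Ds = {x. \<forall>e\<in>E. x \<bullet> e \<ge> -(\<Sum>j\<in>J. phi (Ds j) e)}"
proof -
  define c where "c j = (if j \<in> J then 1 else (0::real))" for j
  have "msum II (\<lambda>j. (\<lambda>x. c j *\<^sub>R x) ` Ds j) = msum II (\<lambda>j. if j \<in> J then Ds j else {0})"
    by (rule msum_cong) (auto simp: c_def Ds_ne image_constant_conv)
  also have "\<dots> = msum J (\<lambda>j. if j \<in> J then Ds j else {0})"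
    by (rule msum_zero_outside) (use JI in auto)
  also have "\<dots> = msum J Ds" by (rule msum_cong) simp
  finally have L: "msum II (\<lambda>j. (\<lambda>x. c j *\<^sub>R x) ` Ds j) = msum J Ds" .
  have "(\<Sum>j\<in>II. c j * phi (Ds j) e) = (\<Sum>j\<in>J. phi (Ds j) e)" for e
  proof -
    have "(\<Sum>j\<in>II. c j * phi (Ds j) e) = (\<Sum>j\<in>II. if j \<in> J then phi (Ds j) e else 0)"
      by (rule sum.cong) (auto simp: c_def)
    also have "\<dots> = (\<Sum>j\<in>II \<inter> J. phi (Ds j) e)" by (simp add: sum.inter_restrict)
    also have "II \<inter> J = J" using JI by blast
    finally show ?thesis .
  qed
  then show ?thesis using Hrep[of c] L by (simp add: c_def)
qed

lemma Ds_H: "j \<in> II \<Longrightarrow> Ds j = {x. \<forall>e\<in>E. x \<bullet> e \<ge> - phi (Ds j) e}"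
  using Q_H[of "{j}"] by (simp add: msum_single)

lemma zero_Ds: assumes "j \<in> II" shows "0 \<in> Ds j"
proof -
  have "\<forall>e\<in>E. phi (Ds j) e \<ge> 0" using ph01[OF assms] by force
  then show ?thesis by (subst Ds_H[OF assms]) auto
qed

lemma mn_Nb_le0: "mn (Nb k) x \<le> 0"
  using mn_props(2)[OF Nb_compact Nb_ne, of 0] Nb_0 by simp

lemma Nb_H:
  assumes BI: "B \<subseteq> II"
  shows "msum B Nb = {y. \<forall>j\<in>II. \<forall>x\<in>S j. x \<bullet> y \<ge> -(if j \<in> B then 1 else 0)}" (is "?L = ?R")
proof
  show "?L \<subseteq> ?R"
  proof
    fix y assume "y \<in> ?L"
    then obtain yy where yy: "\<And>k. k \<in> B \<Longrightarrow> yy k \<in> Nb k" "y = (\<Sum>k\<in>B. yy k)" by (rule msum_elim) blast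
    have finB: "finite B" using BI finite_subset by blast
    have "x \<bullet> y \<ge> -(if j \<in> B then 1 else 0)" if j: "j \<in> II" and x: "x \<in> S j" for j x
    proof -
      have xD: "x \<in> Ds j" using hull_inc[OF x] S_props(2)[OF j] by simp
      have "x \<bullet> y = (\<Sum>k\<in>B. x \<bullet> yy k)" by (simp add: yy(2) inner_sum_right)
      also have "\<dots> \<ge> (\<Sum>k\<in>B. -(if j = k then 1 else 0))"
      proof (rule sum_mono)
        fix k assume kB: "k \<in> B"
        then have kI: "k \<in> II" using BI by blast
        show "-(if j = k then 1 else 0) \<le> x \<bullet> yy k" using pairing[OF j kI xD yy(1)[OF kB]] .
      qed
      also have "(\<Sum>k\<in>B. -(if j = k then 1 else 0)) = -(if j \<in> B then 1 else (0::real))"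
        using finB by (simp add: sum_negf)
      finally show ?thesis .
    qed
    then show "y \<in> ?R" by simp
  qed
next
  show "?R \<subseteq> ?L"
  proof
    fix y assume yR: "y \<in> ?R"
    have finB: "finite B" using BI finite_subset by blast
    have yR': "x \<bullet> y \<ge> -(if j \<in> B then 1 else 0)" if j: "j \<in> II" and x: "x \<in> Ds j" for j x
    proof -
      have "S j \<subseteq> {x. x \<bullet> y \<ge> -(if j \<in> B then 1 else 0)}"
      proof
        fix x assume "x \<in> S j"
        then show "x \<in> {x. x \<bullet> y \<ge> -(if j \<in> B then 1 else 0)}" using yR j by blast
      qed
      then have "convex hull (S j) \<subseteq> {x. x \<bullet> y \<ge> -(if j \<in> B then 1 else 0)}"
        by (rule hull_minimal) (simp add: convex_halfspace_ge[of _ y, simplified inner_commute] inner_commute)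
      then show ?thesis using x S_props[OF j] by auto
    qed
    have LH: "?L = convex hull (msum B (\<lambda>k. insert 0 (Egen k)))"
      unfolding Nb_def' by (rule msum_convex_hull[OF finB])
    have fin: "finite (msum B (\<lambda>k. insert 0 (Egen k)))" by (rule msum_finite[OF finB]) (rule Egen_finite)
    have clL: "closed ?L" and cvL: "convex ?L" unfolding LH
      using fin finite_imp_compact_convex_hull compact_imp_closed by auto
    show "y \<in> ?L"
    proof (rule ccontr)
      assume yL: "y \<notin> ?L"
      obtain x b where xb: "x \<bullet> y < b" "\<forall>p\<in>?L. x \<bullet> p > b"
        using separating_hyperplane_closed_point[OF cvL clL yL] by blast
      define c where "c k = - mn (Nb k) x" for k
      have cnn: "\<forall>k\<in>II. c k \<ge> 0" using mn_Nb_le0 by (simp add: c_def)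
      have "\<forall>e\<in>E. x \<bullet> e \<ge> -(\<Sum>k\<in>II. c k * phi (Ds k) e)"
      proof
        fix e assume eE: "e \<in> E"
        obtain k0 where k0: "k0 \<in> II" "\<forall>j\<in>II. phi (Ds j) e = (if j = k0 then 1 else 0)"
          using ph_ind[OF eE] by blast
        have "(\<Sum>k\<in>II. c k * phi (Ds k) e) = (\<Sum>k\<in>II. if k = k0 then c k else 0)"
          using k0 by (intro sum.cong) auto
        also have "\<dots> = c k0" using k0(1) by simp
        finally have s: "(\<Sum>k\<in>II. c k * phi (Ds k) e) = c k0" .
        have "e \<in> Egen k0" using eE k0 by (simp add: Egen_def)
        then have "e \<in> Nb k0" by (rule Egen_Nb)
        then have "mn (Nb k0) x \<le> e \<bullet> x" using mn_props(2)[OF Nb_compact Nb_ne] by blast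
        then show "x \<bullet> e \<ge> -(\<Sum>k\<in>II. c k * phi (Ds k) e)" using s by (simp add: c_def inner_commute)
      qed
      then have "x \<in> msum II (\<lambda>j. (\<lambda>x. c j *\<^sub>R x) ` Ds j)" using Hrep[OF cnn] by simp
      then obtain x' where x': "\<And>j. j \<in> II \<Longrightarrow> x' j \<in> (\<lambda>x. c j *\<^sub>R x) ` Ds j" "x = (\<Sum>j\<in>II. x' j)"
        by (rule msum_elim) blast
      have "\<forall>j\<in>II. \<exists>z. z \<in> Ds j \<and> x' j = c j *\<^sub>R z" using x'(1) by blast
      then obtain z where z: "\<And>j. j \<in> II \<Longrightarrow> z j \<in> Ds j \<and> x' j = c j *\<^sub>R z j" by metis
      have "x \<bullet> y = (\<Sum>j\<in>II. c j * (z j \<bullet> y))" using z x'(2) by (simp add: inner_sum_left)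
      also have "\<dots> \<ge> (\<Sum>j\<in>II. c j * (-(if j \<in> B then 1 else 0)))"
        using z cnn yR' by (intro sum_mono mult_left_mono) auto
      also have "(\<Sum>j\<in>II. c j * (-(if j \<in> B then 1 else 0))) = (\<Sum>j\<in>II \<inter> B. mn (Nb j) x)"
        by (simp add: c_def sum.inter_restrict[symmetric] if_distrib cong: if_cong)
      also have "II \<inter> B = B" using BI by blast
      also have "(\<Sum>j\<in>B. mn (Nb j) x) = mn ?L x"
        using msum_mn_minface(1)[OF finB, of Nb x] Nb_cn by simp
      finally have le: "mn ?L x \<le> x \<bullet> y" .
      have cL: "compact ?L" "?L \<noteq> {}" using msum_compact_ne[OF finB, of Nb] Nb_cn by auto
      obtain p where p: "p \<in> ?L" "mn ?L x = p \<bullet> x" using mn_props(1)[OF cL] by blast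
      then show False using le xb by (auto simp: inner_commute)
    qed
  qed
qed

lemma r_pos: "II \<noteq> {}"
proof
  assume "II = {}"
  then have "D = {0}" using D_sum by (simp add: msum_empty)
  then have "aff_dim D = 0" by simp
  then show False using D_adim by simp
qed

lemma int0: "0 \<in> interior (nabla_dual r Ds)"
proof -
  obtain \<rho> where rho: "\<rho> > 0" "ball 0 \<rho> \<subseteq> D" using D_ball by blast
  have rp: "real r > 0" using r_pos by auto
  have "ball 0 (\<rho> / r) \<subseteq> nabla_dual r Ds"
  proof
    fix x assume "x \<in> ball (0::real^'n) (\<rho> / r)"
    then have "norm (real r *\<^sub>R x) < \<rho>" using rp by (simp add: field_simps)
    then have "real r *\<^sub>R x \<in> D" using rho by auto
    then obtain xx where xx: "\<And>j. j \<in> II \<Longrightarrow> xx j \<in> Ds j" "real r *\<^sub>R x = (\<Sum>j\<in>II. xx j)"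
      using msum_elim[of "real r *\<^sub>R x" II Ds] \<open>real r *\<^sub>R x \<in> D\<close> D_sum by auto
    have "x = (1 / real r) *\<^sub>R (real r *\<^sub>R x)" using rp by simp
    also have "\<dots> = (\<Sum>j\<in>II. (1 / real r) *\<^sub>R xx j)" using xx(2) by (simp add: scaleR_sum_right)
    also have "\<dots> \<in> convex hull (\<Union>j\<in>II. Ds j)"
    proof (rule convex_sum)
      show "(\<Sum>j\<in>II. 1 / real r) = 1" using rp by simp
      fix j assume "j \<in> II"
      then show "xx j \<in> convex hull (\<Union>j\<in>II. Ds j)" using xx(1) by (intro hull_inc) blast
    qed (use rp in auto)
    finally show "x \<in> nabla_dual r Ds" by (simp add: nabla_dual_def)
  qed
  then show ?thesis using rho rp by (auto simp: mem_interior intro!: exI[of _ "\<rho> / r"])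
qed

lemma v_props:
  assumes iI: "i \<in> II" and vN: "v \<in> nabla0 D Ds i"
  shows "v \<in> Nb i" "lattice_pt v" "\<And>j. j \<in> II \<Longrightarrow> mn (Ds j) v = -(if j = i then 1 else 0)"
proof -
  show vNb: "v \<in> Nb i" and "lattice_pt v" using vN by (auto simp: nabla0_def)
  have vfr: "v \<in> frontier (convex hull E)" using vN by (simp add: nabla0_def dual_polytope_def)
  define CE where "CE = convex hull E"
  have cCE: "compact CE" "convex CE" using finE by (auto simp: CE_def finite_imp_compact_convex_hull)
  obtain M where M: "\<And>x. x \<in> D \<Longrightarrow> norm x \<le> M"
    using compact_imp_bounded[OF D_compact] by (auto simp: bounded_iff)
  have noray: False if a: "a \<noteq> 0" "\<forall>e\<in>E. a \<bullet> e \<ge> 0" for a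
  proof -
    have "a = 0" using ray_zero a(2) by simp
    then show False using a(1) by simp
  qed
  have i0: "0 \<in> interior CE"
  proof (rule ccontr)
    assume ni: "0 \<notin> interior CE"
    show False
    proof (cases "0 \<in> CE")
      case True
      then obtain a where a: "a \<noteq> 0" "\<forall>y\<in>CE. a \<bullet> 0 \<le> a \<bullet> y" using support_nonint[OF cCE(2) True ni] by blast
      have "\<forall>e\<in>E. a \<bullet> e \<ge> 0" using a(2) by (auto simp: CE_def hull_inc)
      then show False using noray a(1) by blast
    next
      case False
      obtain a b where ab: "a \<bullet> 0 < b" "\<forall>x\<in>CE. a \<bullet> x > b"
        using separating_hyperplane_closed_point[OF cCE(2) compact_imp_closed[OF cCE(1)] False] by blast
      have b0: "b > 0" using ab(1) by simp
      have ge: "\<forall>e\<in>E. a \<bullet> e \<ge> 0"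
      proof
        fix e assume "e \<in> E"
        then have "e \<in> CE" by (simp add: CE_def hull_inc)
        then show "a \<bullet> e \<ge> 0" using ab(2) b0 by force
      qed
      show False
      proof (cases "a = 0")
        case True
        have "E = {}"
        proof (rule ccontr)
          assume "E \<noteq> {}"
          then obtain e where "e \<in> E" by blast
          then have "e \<in> CE" by (simp add: CE_def hull_inc)
          then show False using ab(2) b0 True by force
        qed
        then have "vec 1 = (0::real^'n)" using ray_zero by simp
        then show False by (simp add: vec_eq_iff)
      next
        case False
        then show False using noray ge by blast
      qed
    qed
  qed
  have vCE: "v \<in> CE" using vfr cCE by (auto simp: CE_def frontier_def closure_closed compact_imp_closed)
  have vni: "v \<notin> interior CE" using vfr by (simp add: CE_def frontier_def)
  obtain a where a: "a \<noteq> 0" "\<forall>y\<in>CE. a \<bullet> v \<le> a \<bullet> y" using support_nonint[OF cCE(2) vCE vni] by blast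
  obtain \<epsilon> where eps: "\<epsilon> > 0" "ball 0 \<epsilon> \<subseteq> CE" using i0 by (auto simp: mem_interior)
  define q where "q = (- (\<epsilon> / 2) / norm a) *\<^sub>R a"
  have "norm q = \<epsilon> / 2" using a(1) eps by (simp add: q_def)
  then have "q \<in> CE" using eps by auto
  then have "a \<bullet> v \<le> a \<bullet> q" using a by blast
  also have "a \<bullet> q = - (\<epsilon> / 2) * norm a"
    using a(1) by (simp add: q_def power2_norm_eq_inner[symmetric] power2_eq_square)
  also have "\<dots> < 0" using eps a(1) by (simp add: mult_pos_pos)
  finally have av: "a \<bullet> v < 0" .
  define x where "x = (1 / (- (a \<bullet> v))) *\<^sub>R a"
  have xD: "x \<in> D"
  proof (subst D_H, safe)
    fix e assume "e \<in> E"
    then have "a \<bullet> v \<le> a \<bullet> e" using a(2) by (auto simp: CE_def hull_inc)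
    then have "(a \<bullet> e) / (- (a \<bullet> v)) \<ge> (a \<bullet> v) / (- (a \<bullet> v))" using av by (intro divide_right_mono) auto
    then show "x \<bullet> e \<ge> -1" using av by (simp add: x_def)
  qed
  have xv: "x \<bullet> v = -1" using av by (simp add: x_def)
  obtain xx where xx: "\<And>j. j \<in> II \<Longrightarrow> xx j \<in> Ds j" "x = (\<Sum>j\<in>II. xx j)"
    using msum_elim[of x II Ds] xD D_sum by auto
  have low: "\<And>j. j \<in> II \<Longrightarrow> xx j \<bullet> v \<ge> -(if j = i then 1 else 0)"
    using pairing[OF _ iI _ vNb] xx(1) by blast
  have sumeq: "(\<Sum>j\<in>II. xx j \<bullet> v) = (\<Sum>j\<in>II. -(if j = i then 1 else (0::real)))"
    using xv xx(2) iI by (simp add: inner_sum_left sum_negf)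
  fix j assume jI: "j \<in> II"
  have "xx j \<bullet> v = -(if j = i then 1 else 0)"
    using sum_eq_le_imp_eq[where I=II and f="\<lambda>j. xx j \<bullet> v" and g="\<lambda>j. -(if j = i then 1 else 0)", OF _ low sumeq jI] by simp
  then show "mn (Ds j) v = -(if j = i then 1 else 0)"
    using mn_eqI[of "xx j" "Ds j" v] xx(1)[OF jI] low pairing[OF jI iI _ vNb] by blast
qed

end

lemma convex_hyperplane': "convex {x. x \<bullet> a = (b::real)}"
  using convex_hyperplane[of a b] by (simp add: inner_commute)

lemma affine_hyperplane': "affine {x. x \<bullet> a = (b::real)}"
  using affine_hyperplane[of a b] by (simp add: inner_commute)

lemma prolong_ineq:
  fixes w q y :: "real^'n"
  assumes d: "d > 0" and ge: "(w + d *\<^sub>R (w - q)) \<bullet> y \<ge> -1" and wy: "w \<bullet> y = -1"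
  shows "q \<bullet> y \<le> -1"
proof -
  have "(w + d *\<^sub>R (w - q)) \<bullet> y = -1 + d * (-1 - q \<bullet> y)"
    using wy by (simp add: inner_add_left inner_diff_left algebra_simps)
  then have "d * (-1 - q \<bullet> y) \<ge> 0" using ge by simp
  then have "-1 - q \<bullet> y \<ge> 0" using d by (simp add: zero_le_mult_iff)
  then show ?thesis by simp
qed

context nefctx
begin

lemma main:
  fixes i :: nat and J :: "nat set" and v w :: "real^'n"
  assumes iJ: "i \<in> J" and JI: "J \<subseteq> II" and vN: "v \<in> nabla0 D Ds i" and wl: "lattice_pt w"
  defines "F \<equiv> msum J (\<lambda>j. minface (Ds j) v)"
      and "G \<equiv> mplus (minface (Nb i) w) (msum (II - J) (\<lambda>j. minface (Nb j) w))"
  shows "(w \<in> rel_interior F \<longleftrightarrow> w \<in> Delta0 r Ds i \<and> v \<in> rel_interior G) \<and>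
         (w \<in> rel_interior F \<longrightarrow> aff_dim F + aff_dim G = int CARD('n) - 1)"
proof -
  have iI: "i \<in> II" using iJ JI by blast
  have finJ: "finite J" using JI finite_subset by blast
  define K where "K = II - J"
  define B where "B = insert i K"
  have finK: "finite K" and iK: "i \<notin> K" and BI: "B \<subseteq> II" using iJ iI by (auto simp: K_def B_def)
  have finB: "finite B" using finK by (simp add: B_def)
  have vNb: "v \<in> Nb i" and vlat: "lattice_pt v"
    and mnv: "\<And>j. j \<in> II \<Longrightarrow> mn (Ds j) v = -(if j = i then 1 else 0)"
    using v_props[OF iI vN] by auto
  define Q where "Q = msum J Ds"
  define P where "P = msum B Nb"
  have DsJ: "\<And>j. j \<in> J \<Longrightarrow> compact (Ds j) \<and> Ds j \<noteq> {}" using Ds_cn JI by blast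
  have cQ: "compact Q" "Q \<noteq> {}" using msum_compact_ne[OF finJ DsJ] by (auto simp: Q_def)
  have cP: "compact P" "P \<noteq> {}" using msum_compact_ne[OF finB, of Nb] Nb_cn by (auto simp: P_def)
  have Fm: "F = minface Q v" using msum_mn_minface(2)[OF finJ DsJ] by (simp add: F_def Q_def)
  have mnQ: "mn Q v = -1"
  proof -
    have "mn Q v = (\<Sum>j\<in>J. mn (Ds j) v)" using msum_mn_minface(1)[OF finJ DsJ] by (simp add: Q_def)
    also have "\<dots> = (\<Sum>j\<in>J. -(if j = i then 1 else 0))" using mnv JI by (intro sum.cong) auto
    also have "\<dots> = -1" using iJ finJ by (simp add: sum_negf)
    finally show ?thesis .
  qed
  have Fchar: "F = {q \<in> Q. q \<bullet> v = -1}" using Fm mnQ by (simp add: minface_mn)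
  have GB: "G = msum B (\<lambda>k. minface (Nb k) w)"
    unfolding G_def B_def K_def[symmetric] using msum_insert[OF finK iK, of "\<lambda>k. minface (Nb k) w"] by simp
  have Gm: "G = minface P w" using msum_mn_minface(2)[OF finB, of Nb w] Nb_cn GB by (simp add: P_def)
  have mnP: "mn P w = (\<Sum>k\<in>B. mn (Nb k) w)" using msum_mn_minface(1)[OF finB, of Nb w] Nb_cn by (simp add: P_def)
  have Qhull: "Q = convex hull (msum J S)"
  proof -
    have "Q = msum J (\<lambda>j. convex hull (S j))" unfolding Q_def using JI S_props by (intro msum_cong) auto
    also have "\<dots> = convex hull (msum J S)" by (rule msum_convex_hull[OF finJ])
    finally show ?thesis .
  qed
  have finSQ: "finite (msum J S)" using JI S_props by (intro msum_finite[OF finJ]) auto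
  have Phull: "P = convex hull (msum B (\<lambda>k. insert 0 (Egen k)))"
    unfolding P_def Nb_def' by (rule msum_convex_hull[OF finB])
  have finSP: "finite (msum B (\<lambda>k. insert 0 (Egen k)))" by (rule msum_finite[OF finB]) (rule Egen_finite)
  have cvQ: "convex Q" and cvP: "convex P" unfolding Qhull Phull by simp_all
  have cvF: "convex F" unfolding Fchar
    using convex_Int[OF cvQ convex_hyperplane'[of v "-1"]] by (simp add: Int_def)
  have pairQ: "q \<bullet> y \<ge> -(if k \<in> J then 1 else 0)" if "q \<in> Q" "k \<in> II" "y \<in> Nb k" for q k y
  proof -
    obtain qq where qq: "\<And>j. j \<in> J \<Longrightarrow> qq j \<in> Ds j" "q = (\<Sum>j\<in>J. qq j)"
      using msum_elim[of q J Ds] \<open>q \<in> Q\<close> unfolding Q_def by auto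
    have "q \<bullet> y = (\<Sum>j\<in>J. qq j \<bullet> y)" by (simp add: qq(2) inner_sum_left)
    also have "\<dots> \<ge> (\<Sum>j\<in>J. -(if j = k then 1 else 0))"
    proof (rule sum_mono)
      fix j assume jJ: "j \<in> J"
      then have jI: "j \<in> II" using JI by blast
      show "-(if j = k then 1 else 0) \<le> qq j \<bullet> y" using pairing[OF jI that(2) qq(1)[OF jJ] that(3)] .
    qed
    also have "(\<Sum>j\<in>J. -(if j = k then 1 else 0)) = -(if k \<in> J then 1 else (0::real))"
      using finJ by (simp add: sum_negf)
    finally show ?thesis .
  qed
  have pairQP: "q \<bullet> y \<ge> -1" if "q \<in> Q" "y \<in> P" for q y
  proof -
    obtain yy where yy: "\<And>k. k \<in> B \<Longrightarrow> yy k \<in> Nb k" "y = (\<Sum>k\<in>B. yy k)"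
      using msum_elim[of y B Nb] \<open>y \<in> P\<close> unfolding P_def by auto
    have "q \<bullet> y = (\<Sum>k\<in>B. q \<bullet> yy k)" by (simp add: yy(2) inner_sum_right)
    also have "\<dots> \<ge> (\<Sum>k\<in>B. -(if k \<in> J then 1 else 0))"
    proof (rule sum_mono)
      fix k assume kB: "k \<in> B"
      then have kI: "k \<in> II" using BI by blast
      show "-(if k \<in> J then 1 else 0) \<le> q \<bullet> yy k" using pairQ[OF that(1) kI yy(1)[OF kB]] .
    qed
    also have "(\<Sum>k\<in>B. -(if k \<in> J then 1 else 0)) = (\<Sum>k\<in>B. -(if k = i then 1 else (0::real)))"
      using iJ by (intro sum.cong) (auto simp: B_def K_def)
    also have "\<dots> = -1" using finB by (simp add: sum_negf B_def)
    finally show ?thesis .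
  qed
  have vP: "v \<in> P"
  proof -
    have "(\<Sum>k\<in>B. if k = i then v else 0) \<in> P"
      unfolding P_def by (rule msum_mem) (use vNb Nb_0 in auto)
    then show ?thesis using finB by (simp add: B_def)
  qed
  obtain x0 where x0: "x0 \<in> minface (Ds i) v" using minface_ne[OF Ds_compact[OF iI] Ds_ne[OF iI]] by blast
  have mfDs: "a \<in> minface (Ds j) v \<longleftrightarrow> a \<in> Ds j \<and> a \<bullet> v = -(if j = i then 1 else 0)" if "j \<in> II" for j a
    using mnv[OF that] by (simp add: minface_mn)
  have x0D: "x0 \<in> Ds i" and x0v: "x0 \<bullet> v = -1" using x0 mfDs[OF iI] by auto
  have zmf: "0 \<in> minface (Ds j) v" if "j \<in> J" "j \<noteq> i" for j
    using that JI zero_Ds mfDs by auto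
  have FelI: "a \<in> F" if "a \<in> minface (Ds i) v" for a
  proof -
    have "(\<Sum>j\<in>J. if j = i then a else 0) \<in> F"
      unfolding F_def by (rule msum_mem) (use that zmf in auto)
    then show ?thesis using finJ iJ by simp
  qed
  have FelJ: "x0 + a \<in> F" if "j0 \<in> J" "j0 \<noteq> i" "a \<in> minface (Ds j0) v" for j0 a
  proof -
    have "(\<Sum>j\<in>J. (if j = i then x0 else 0) + (if j = j0 then a else 0)) \<in> F"
      unfolding F_def by (rule msum_mem) (use that zmf x0 in auto)
    then show ?thesis using finJ iJ that(1) by (simp add: sum.distrib)
  qed
  have mnK: "mn (Nb k) w = 0" if "w \<in> Q" "k \<in> K" for k
  proof (rule mn_eqI[OF Nb_0])
    show "0 \<bullet> w = 0" by simp
    fix q assume "q \<in> Nb k"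
    then have "w \<bullet> q \<ge> 0" using pairQ[OF that(1), of k q] that(2) by (auto simp: K_def)
    then show "0 \<le> q \<bullet> w" by (simp add: inner_commute)
  qed
  have zmfK: "0 \<in> minface (Nb k) w" if "w \<in> Q" "k \<in> K" for k
    using mnK[OF that] Nb_0 by (simp add: minface_mn)
  have GelI: "a \<in> G" if "w \<in> Q" "a \<in> minface (Nb i) w" for a
  proof -
    have "(\<Sum>k\<in>B. if k = i then a else 0) \<in> G"
      unfolding GB by (rule msum_mem) (use that zmfK iK in \<open>auto simp: B_def\<close>)
    then show ?thesis using finB by (simp add: B_def)
  qed
  have GelK: "y0 + e \<in> G" if "w \<in> Q" "k0 \<in> K" "y0 \<in> minface (Nb i) w" "e \<in> minface (Nb k0) w" for y0 e k0
  proof -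
    have "(\<Sum>k\<in>B. (if k = i then y0 else 0) + (if k = k0 then e else 0)) \<in> G"
      unfolding GB by (rule msum_mem) (use that zmfK iK in \<open>auto simp: B_def\<close>)
    then show ?thesis using finB that(2) by (simp add: sum.distrib B_def)
  qed
  obtain y0 where y0: "y0 \<in> minface (Nb i) w" using minface_ne[OF Nb_compact Nb_ne] by blast
  have wQi: "w \<in> Q" if "w \<in> Ds i"
  proof -
    have "(\<Sum>j\<in>J. if j = i then w else 0) \<in> Q"
      unfolding Q_def by (rule msum_mem) (use that zero_Ds JI in auto)
    then show ?thesis using finJ iJ by simp
  qed
  have sumJ: "(\<Sum>j\<in>J. phi (Ds j) e) = (if k \<in> J then 1 else 0)"
    if "k \<in> II" "\<forall>j\<in>II. phi (Ds j) e = (if j = k then 1 else 0)" for e k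
  proof -
    have "(\<Sum>j\<in>J. phi (Ds j) e) = (\<Sum>j\<in>J. if j = k then 1 else 0)" using that JI by (intro sum.cong) auto
    then show ?thesis using finJ by simp
  qed
  have mnPw: "mn P w = -1" if "w \<in> Q" "mn (Nb i) w = -1"
  proof -
    have "mn P w = mn (Nb i) w + (\<Sum>k\<in>K. mn (Nb k) w)" using mnP finK iK by (simp add: B_def)
    also have "(\<Sum>k\<in>K. mn (Nb k) w) = 0" using mnK[OF that(1)] by simp
    finally show ?thesis using that(2) by simp
  qed
  have Gchar: "G = {y \<in> P. y \<bullet> w = -1}" if "w \<in> Q" "mn (Nb i) w = -1"
    using Gm mnPw[OF that] by (simp add: minface_mn)
  have tight: "e \<in> G \<or> y0 + e \<in> G"
    if wD: "w \<in> Ds i" and mi: "mn (Nb i) w = -1" and eE: "e \<in> E"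
      and et: "e \<bullet> w = -(\<Sum>j\<in>J. phi (Ds j) e)" for e
  proof -
    have wQ: "w \<in> Q" by (rule wQi[OF wD])
    obtain k where k: "k \<in> II" "\<forall>j\<in>II. phi (Ds j) e = (if j = k then 1 else 0)" using ph_ind[OF eE] by blast
    have sk: "(\<Sum>j\<in>J. phi (Ds j) e) = (if k \<in> J then 1 else 0)" by (rule sumJ[OF k])
    have eg: "e \<in> Egen k" using eE k by (simp add: Egen_def)
    show ?thesis
    proof (cases "k = i")
      case True
      then have "e \<in> minface (Nb i) w" using eg Egen_Nb et sk iJ mi by (simp add: minface_mn)
      then show ?thesis using GelI[OF wQ] by blast
    next
      case False
      show ?thesis
      proof (cases "k \<in> J")
        case True
        have "w \<bullet> e \<ge> - phi (Ds i) e" by (rule Ds_lower[OF iI wD])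
        then have "w \<bullet> e \<ge> 0" using k iI False by simp
        then show ?thesis using et sk True by (simp add: inner_commute)
      next
        case kJ: False
        then have kK: "k \<in> K" using k(1) by (simp add: K_def)
        have "e \<in> minface (Nb k) w" using eg Egen_Nb et sk kJ mnK[OF wQ kK] by (simp add: minface_mn)
        then show ?thesis using GelK[OF wQ kK y0] by blast
      qed
    qed
  qed
  have fwd: "w \<in> Ds i \<and> mn (Nb i) w = -1 \<and> w \<in> Delta0 r Ds i \<and> v \<in> rel_interior G \<and>
             (\<forall>q\<in>F. \<forall>y\<in>G. q \<bullet> y = -1)" if wr: "w \<in> rel_interior F"
  proof -
    have wF: "w \<in> F" using wr rel_interior_subset by blast
    then have wQ: "w \<in> Q" and wv: "w \<bullet> v = -1" using Fchar by auto
    have mnPw': "mn P w = -1"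
    proof (rule mn_eqI[OF vP])
      show "v \<bullet> w = -1" using wv by (simp add: inner_commute)
      fix q assume "q \<in> P" then show "-1 \<le> q \<bullet> w" using pairQP[OF wQ] by (simp add: inner_commute)
    qed
    have mi: "mn (Nb i) w = -1"
    proof -
      have "mn P w = mn (Nb i) w + (\<Sum>k\<in>K. mn (Nb k) w)" using mnP finK iK by (simp add: B_def)
      then show ?thesis using mnK[OF wQ] mnPw' by simp
    qed
    have Gc: "G = {y \<in> P. y \<bullet> w = -1}" by (rule Gchar[OF wQ mi])
    have vG: "v \<in> G" using Gc vP wv by (simp add: inner_commute)
    have star: "q \<bullet> y = -1" if qF: "q \<in> F" and yG: "y \<in> G" for q y
    proof -
      obtain d where d: "d > 0" "w + d *\<^sub>R (w - q) \<in> F" using relint_prolong[OF wr qF] by blast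
      have yP: "y \<in> P" and yw: "w \<bullet> y = -1" using yG Gc by (auto simp: inner_commute)
      have "(w + d *\<^sub>R (w - q)) \<bullet> y \<ge> -1" using d(2) Fchar pairQP yP by auto
      then have "q \<bullet> y \<le> -1" using prolong_ineq[OF d(1) _ yw] by blast
      moreover have "q \<bullet> y \<ge> -1" using qF Fchar pairQP yP by auto
      ultimately show ?thesis by simp
    qed
    have wDi: "w \<in> Ds i"
    proof (subst Ds_H[OF iI], safe)
      fix e assume eE: "e \<in> E"
      obtain k where k: "k \<in> II" "\<forall>j\<in>II. phi (Ds j) e = (if j = k then 1 else 0)" using ph_ind[OF eE] by blast
      have sk: "(\<Sum>j\<in>J. phi (Ds j) e) = (if k \<in> J then 1 else 0)" by (rule sumJ[OF k])
      have wq: "w \<bullet> e \<ge> -(\<Sum>j\<in>J. phi (Ds j) e)" using wQ Q_H[OF JI] eE by (auto simp: Q_def)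
      show "w \<bullet> e \<ge> - phi (Ds i) e"
      proof (cases "k = i")
        case True
        then show ?thesis using wq sk k iI iJ by simp
      next
        case False
        then have pi0: "phi (Ds i) e = 0" using k iI by simp
        show ?thesis
        proof (cases "k \<in> J")
          case False
          then show ?thesis using wq sk pi0 by simp
        next
          case kJ: True
          have ge1: "w \<bullet> e \<ge> -1" using wq sk kJ by simp
          have int: "w \<bullet> e \<in> \<int>" using lattice_inner_int[OF wl E_lat[OF eE]] .
          show ?thesis
          proof (rule ccontr)
            assume "\<not> ?thesis"
            then have neg: "w \<bullet> e < 0" using pi0 by simp
            from int obtain z :: int where z: "w \<bullet> e = of_int z" by (rule Ints_cases)
            have "z = -1" using ge1 neg z by linarith
            then have we: "w \<bullet> e = -1" using z by simp
            have x0F: "x0 \<in> F" by (rule FelI[OF x0])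
            obtain d where d: "d > 0" "w + d *\<^sub>R (w - x0) \<in> F" using relint_prolong[OF wr x0F] by blast
            have "(w + d *\<^sub>R (w - x0)) \<bullet> e \<ge> -1"
              using d(2) Fchar Q_H[OF JI] eE sk kJ by (auto simp: Q_def)
            then have "x0 \<bullet> e \<le> -1" using prolong_ineq[OF d(1) _ we] by blast
            moreover have "x0 \<bullet> e \<ge> - phi (Ds i) e" by (rule Ds_lower[OF iI x0D])
            ultimately show False using pi0 by simp
          qed
        qed
      qed
    qed
    have wfr: "w \<in> frontier (nabla_dual r Ds)"
    proof -
      have wND: "w \<in> nabla_dual r Ds" unfolding nabla_dual_def by (rule hull_inc) (use wDi iI in blast)
      have "(\<Union>j\<in>II. Ds j) \<subseteq> {x. x \<bullet> v \<ge> -1}"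
      proof
        fix x assume "x \<in> (\<Union>j\<in>II. Ds j)"
        then obtain j where j: "j \<in> II" "x \<in> Ds j" by blast
        have "mn (Ds j) v \<le> x \<bullet> v" using mn_props(2)[OF Ds_compact[OF j(1)] Ds_ne[OF j(1)] j(2)] .
        then show "x \<in> {x. x \<bullet> v \<ge> -1}" using mnv[OF j(1)] by (auto split: if_splits)
      qed
      then have NDv: "nabla_dual r Ds \<subseteq> {x. x \<bullet> v \<ge> -1}" unfolding nabla_dual_def
        by (rule hull_minimal) (simp add: convex_halfspace_ge[of _ v, simplified inner_commute] inner_commute)
      have v0: "v \<noteq> 0" using wv by auto
      have "w \<notin> interior (nabla_dual r Ds)"
      proof
        assume "w \<in> interior (nabla_dual r Ds)"
        then obtain \<epsilon> where eps: "\<epsilon> > 0" "ball w \<epsilon> \<subseteq> nabla_dual r Ds" by (auto simp: mem_interior)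
        define z where "z = w - ((\<epsilon> / 2) / norm v) *\<^sub>R v"
        have "dist w z = \<epsilon> / 2" using v0 eps by (simp add: z_def dist_norm)
        then have "z \<in> nabla_dual r Ds" using eps by auto
        then have "z \<bullet> v \<ge> -1" using NDv by auto
        moreover have "z \<bullet> v = -1 - (\<epsilon> / 2) * norm v"
          using v0 wv by (simp add: z_def inner_diff_left power2_norm_eq_inner[symmetric] power2_eq_square)
        moreover have "(\<epsilon> / 2) * norm v > 0" using eps v0 by simp
        ultimately show False by simp
      qed
      then show ?thesis using wND closure_subset by (auto simp: frontier_def)
    qed
    have vrel: "v \<in> rel_interior G"
    proof (rule relint_by_functionals)
      show "convex G" unfolding Gc using convex_Int[OF cvP convex_hyperplane'[of w "-1"]] by (simp add: Int_def)
      show "v \<in> G" by (rule vG)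
      fix u assume hu: "\<forall>y\<in>G. u \<bullet> v \<le> u \<bullet> y"
      have "\<forall>q\<in>P. v \<bullet> w \<le> q \<bullet> w"
      proof
        fix q assume "q \<in> P"
        then have "mn P w \<le> q \<bullet> w" by (rule mn_props(2)[OF cP])
        then show "v \<bullet> w \<le> q \<bullet> w" using mnPw' wv by (simp add: inner_commute)
      qed
      then have pmin: "\<forall>q\<in>convex hull (msum B (\<lambda>k. insert 0 (Egen k))). v \<bullet> w \<le> q \<bullet> w" using Phull by simp
      have face: "\<forall>q\<in>convex hull (msum B (\<lambda>k. insert 0 (Egen k))). q \<bullet> w = v \<bullet> w \<longrightarrow> u \<bullet> v \<le> u \<bullet> q"
        using hu Gc vG unfolding Phull[symmetric] by auto
      obtain t where t: "\<forall>q\<in>P. (u + t *\<^sub>R w) \<bullet> v \<le> (u + t *\<^sub>R w) \<bullet> q"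
        using face_tilt[OF finSP _ pmin face] vP Phull by auto
      define HP where "HP = (\<lambda>(j,x). (x, -(if j \<in> B then 1 else (0::real)))) ` (SIGMA j:II. S j)"
      have finHP: "finite HP" unfolding HP_def using S_props by (intro finite_imageI finite_SigmaI) auto
      have HPiff: "(\<forall>(a,\<beta>)\<in>HP. a \<bullet> y \<ge> \<beta>) \<longleftrightarrow> y \<in> P" for y
        unfolding P_def Nb_H[OF BI] HP_def by auto
      have zin: "\<forall>(a,\<beta>)\<in>HP. a \<bullet> v \<ge> \<beta>" using HPiff vP by blast
      have opt: "(u + t *\<^sub>R w) \<bullet> v \<le> (u + t *\<^sub>R w) \<bullet> x" if "\<forall>(a,\<beta>)\<in>HP. a \<bullet> x \<ge> \<beta>" for x
        using t that HPiff by blast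
      define A where "A = {a. \<exists>\<beta>. (a,\<beta>)\<in>HP \<and> a \<bullet> v = \<beta>}"
      obtain \<mu> where mu: "u + t *\<^sub>R w = (\<Sum>a\<in>A. \<mu> a *\<^sub>R a)"
        using kkt[OF finHP zin opt] unfolding A_def by blast
      have constA: "\<exists>c. \<forall>y\<in>G. a \<bullet> y = c" if aA: "a \<in> A" for a
      proof -
        obtain j where j: "j \<in> II" "a \<in> S j" "a \<bullet> v = -(if j \<in> B then 1 else 0)"
          using aA by (auto simp: A_def HP_def)
        have aD: "a \<in> Ds j" using hull_inc[OF j(2)] S_props(2)[OF j(1)] by simp
        show ?thesis
        proof (cases "j = i")
          case True
          then have "a \<in> minface (Ds i) v" using mfDs[OF iI] aD j by (simp add: B_def)
          then have "a \<in> F" by (rule FelI)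
          then show ?thesis using star by blast
        next
          case False
          show ?thesis
          proof (cases "j \<in> B")
            case True
            then have "a \<bullet> v = -1" using j by simp
            moreover have "a \<bullet> v \<ge> 0" using pairing[OF j(1) iI aD vNb] False by simp
            ultimately show ?thesis by simp
          next
            case jB: False
            then have jJ: "j \<in> J" using j(1) by (auto simp: B_def K_def)
            have "a \<in> minface (Ds j) v" using mfDs[OF j(1)] aD j jB False by simp
            then have "x0 + a \<in> F" by (rule FelJ[OF jJ False])
            have "\<forall>y\<in>G. a \<bullet> y = 0"
            proof
              fix y assume yG: "y \<in> G"
              have "(x0 + a) \<bullet> y = -1" using star[OF \<open>x0 + a \<in> F\<close> yG] .
              moreover have "x0 \<bullet> y = -1" using star[OF FelI[OF x0] yG] .
              ultimately show "a \<bullet> y = 0" by (simp add: inner_add_left)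
            qed
            then show ?thesis by blast
          qed
        qed
      qed
      then have "\<forall>a\<in>A. \<exists>c. \<forall>y\<in>G. a \<bullet> y = c" by blast
      then obtain cf where cf0: "\<forall>a\<in>A. \<forall>y\<in>G. a \<bullet> y = cf a" by (auto dest!: bchoice)
      then have cf: "\<And>a y. a \<in> A \<Longrightarrow> y \<in> G \<Longrightarrow> a \<bullet> y = cf a" by blast
      have val: "(u + t *\<^sub>R w) \<bullet> y = (\<Sum>a\<in>A. \<mu> a * cf a)" if "y \<in> G" for y
        using cf[OF _ that] by (simp add: mu inner_sum_left)
      show "\<forall>y\<in>G. u \<bullet> y = u \<bullet> v"
      proof
        fix y assume yG: "y \<in> G"
        have "y \<bullet> w = -1" "v \<bullet> w = -1" using yG vG Gc by auto
        then show "u \<bullet> y = u \<bullet> v" using val[OF yG] val[OF vG]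
          by (simp add: inner_add_left inner_commute[of w])
      qed
    qed
    show ?thesis using wDi mi wfr wl vrel star by (simp add: Delta0_def)
  qed
  have bwd: "w \<in> rel_interior F" if w0: "w \<in> Delta0 r Ds i" and vrel: "v \<in> rel_interior G"
  proof -
    have wDi: "w \<in> Ds i" and wfr: "w \<in> frontier (nabla_dual r Ds)" using w0 by (auto simp: Delta0_def)
    have wQ: "w \<in> Q" by (rule wQi[OF wDi])
    have mi: "mn (Nb i) w = -1"
    proof -
      obtain p where p: "p \<in> Nb i" "mn (Nb i) w = p \<bullet> w" using mn_props(1)[OF Nb_compact Nb_ne] by blast
      have ge: "mn (Nb i) w \<ge> -1" using pairQ[OF wQ iI p(1)] p(2) iJ by (simp add: inner_commute)
      have le: "mn (Nb i) w \<le> 0" by (rule mn_Nb_le0)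
      obtain s where s: "s \<in> insert 0 (Egen i)" "\<forall>q\<in>Nb i. s \<bullet> w \<le> q \<bullet> w"
        using min_hull_gen[OF Egen_finite, of i w] unfolding Nb_def' by blast
      have "s \<in> Nb i" unfolding Nb_def' using s(1) by (rule hull_inc)
      then have mns: "mn (Nb i) w = s \<bullet> w" using s(2) by (intro mn_eqI) auto
      have "lattice_pt s" using s(1) E_lat by (auto simp: Egen_def lattice_pt_def)
      then have "s \<bullet> w \<in> \<int>" using lattice_inner_int wl by blast
      then obtain z :: int where z: "mn (Nb i) w = of_int z" using mns by (auto elim: Ints_cases)
      have "z \<noteq> 0"
      proof
        assume "z = 0"
        then have m0: "mn (Nb i) w = 0" using z by simp
        have "\<forall>e\<in>E. w \<bullet> e \<ge> 0"
        proof
          fix e assume eE: "e \<in> E"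
          obtain k where k: "k \<in> II" "\<forall>j\<in>II. phi (Ds j) e = (if j = k then 1 else 0)" using ph_ind[OF eE] by blast
          show "w \<bullet> e \<ge> 0"
          proof (cases "k = i")
            case True
            then have "e \<in> Nb i" using eE k by (intro Egen_Nb) (simp add: Egen_def)
            then have "mn (Nb i) w \<le> e \<bullet> w" using mn_props(2)[OF Nb_compact Nb_ne] by blast
            then show ?thesis using m0 by (simp add: inner_commute)
          next
            case False
            then show ?thesis using Ds_lower[OF iI wDi, of e] k iI by simp
          qed
        qed
        then have "w = 0" by (rule ray_zero)
        then show False using wfr int0 by (simp add: frontier_def)
      qed
      then show ?thesis using z ge le by (cases "z = -1") (simp, linarith)
    qed
    have Gc: "G = {y \<in> P. y \<bullet> w = -1}" by (rule Gchar[OF wQ mi])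
    have vG: "v \<in> G" using vrel rel_interior_subset by blast
    have wv: "w \<bullet> v = -1" using vG Gc by (simp add: inner_commute)
    have wF: "w \<in> F" using Fchar wQ wv by simp
    have star: "q \<bullet> y = -1" if qF: "q \<in> F" and yG: "y \<in> G" for q y
    proof -
      obtain d where d: "d > 0" "v + d *\<^sub>R (v - y) \<in> G" using relint_prolong[OF vrel yG] by blast
      have qQ: "q \<in> Q" and qv: "v \<bullet> q = -1" using qF Fchar by (auto simp: inner_commute)
      have "v + d *\<^sub>R (v - y) \<in> P" using d(2) Gc by auto
      then have "q \<bullet> (v + d *\<^sub>R (v - y)) \<ge> -1" using pairQP[OF qQ] by blast
      then have "(v + d *\<^sub>R (v - y)) \<bullet> q \<ge> -1" by (simp add: inner_commute)
      then have "y \<bullet> q \<le> -1" using prolong_ineq[OF d(1) _ qv] by blast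
      moreover have "q \<bullet> y \<ge> -1" using qQ yG Gc pairQP by auto
      ultimately show ?thesis by (simp add: inner_commute)
    qed
    have y0G: "y0 \<in> G" by (rule GelI[OF wQ y0])
    show ?thesis
    proof (rule relint_by_functionals[OF cvF wF])
      fix u assume hu: "\<forall>q\<in>F. u \<bullet> w \<le> u \<bullet> q"
      have "\<forall>q\<in>Q. w \<bullet> v \<le> q \<bullet> v"
      proof
        fix q assume "q \<in> Q"
        then have "mn Q v \<le> q \<bullet> v" by (rule mn_props(2)[OF cQ])
        then show "w \<bullet> v \<le> q \<bullet> v" using mnQ wv by simp
      qed
      then have pmin: "\<forall>q\<in>convex hull (msum J S). w \<bullet> v \<le> q \<bullet> v" using Qhull by simp
      have face: "\<forall>q\<in>convex hull (msum J S). q \<bullet> v = w \<bullet> v \<longrightarrow> u \<bullet> w \<le> u \<bullet> q"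
        using hu Fchar wv unfolding Qhull[symmetric] by auto
      obtain t where t: "\<forall>q\<in>Q. (u + t *\<^sub>R v) \<bullet> w \<le> (u + t *\<^sub>R v) \<bullet> q"
        using face_tilt[OF finSQ _ pmin face] wQ Qhull by auto
      define HQ where "HQ = (\<lambda>e. (e, -(\<Sum>j\<in>J. phi (Ds j) e))) ` E"
      have finHQ: "finite HQ" unfolding HQ_def using finE by simp
      have HQiff: "(\<forall>(a,\<beta>)\<in>HQ. a \<bullet> y \<ge> \<beta>) \<longleftrightarrow> y \<in> Q" for y
        unfolding Q_def Q_H[OF JI] HQ_def by (auto simp: inner_commute)
      have zin: "\<forall>(a,\<beta>)\<in>HQ. a \<bullet> w \<ge> \<beta>" using HQiff wQ by blast
      have opt: "(u + t *\<^sub>R v) \<bullet> w \<le> (u + t *\<^sub>R v) \<bullet> x" if "\<forall>(a,\<beta>)\<in>HQ. a \<bullet> x \<ge> \<beta>" for x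
        using t that HQiff by blast
      define A where "A = {a. \<exists>\<beta>. (a,\<beta>)\<in>HQ \<and> a \<bullet> w = \<beta>}"
      obtain \<mu> where mu: "u + t *\<^sub>R v = (\<Sum>a\<in>A. \<mu> a *\<^sub>R a)"
        using kkt[OF finHQ zin opt] unfolding A_def by blast
      have constA: "\<exists>c. \<forall>q\<in>F. a \<bullet> q = c" if aA: "a \<in> A" for a
      proof -
        have aE: "a \<in> E" and at: "a \<bullet> w = -(\<Sum>j\<in>J. phi (Ds j) a)" using aA by (auto simp: A_def HQ_def)
        from tight[OF wDi mi aE at] show ?thesis
        proof
          assume "a \<in> G"
          then have "\<forall>q\<in>F. a \<bullet> q = -1" using star by (simp add: inner_commute)
          then show ?thesis by blast
        next
          assume "y0 + a \<in> G"
          have "\<forall>q\<in>F. a \<bullet> q = 0"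
          proof
            fix q assume qF: "q \<in> F"
            have "q \<bullet> (y0 + a) = -1" using star[OF qF \<open>y0 + a \<in> G\<close>] .
            moreover have "q \<bullet> y0 = -1" using star[OF qF y0G] .
            ultimately show "a \<bullet> q = 0" by (simp add: inner_add_right inner_commute)
          qed
          then show ?thesis by blast
        qed
      qed
      then have "\<forall>a\<in>A. \<exists>c. \<forall>q\<in>F. a \<bullet> q = c" by blast
      then obtain cf where cf0: "\<forall>a\<in>A. \<forall>q\<in>F. a \<bullet> q = cf a" by (auto dest!: bchoice)
      then have cf: "\<And>a q. a \<in> A \<Longrightarrow> q \<in> F \<Longrightarrow> a \<bullet> q = cf a" by blast
      have val: "(u + t *\<^sub>R v) \<bullet> q = (\<Sum>a\<in>A. \<mu> a * cf a)" if "q \<in> F" for q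
        using cf[OF _ that] by (simp add: mu inner_sum_left)
      show "\<forall>q\<in>F. u \<bullet> q = u \<bullet> w"
      proof
        fix q assume qF: "q \<in> F"
        have "q \<bullet> v = -1" using qF Fchar by auto
        then show "u \<bullet> q = u \<bullet> w" using val[OF qF] val[OF wF] wv
          by (simp add: inner_add_left inner_commute[of v])
      qed
    qed
  qed
  have dims: "aff_dim F + aff_dim G = int CARD('n) - 1" if wr: "w \<in> rel_interior F"
  proof -
    have f: "w \<in> Ds i" "mn (Nb i) w = -1" "v \<in> rel_interior G" and star: "\<And>q y. q \<in> F \<Longrightarrow> y \<in> G \<Longrightarrow> q \<bullet> y = -1"
      using fwd[OF wr] by auto
    have wF: "w \<in> F" using wr rel_interior_subset by blast
    have wQ: "w \<in> Q" and wv: "w \<bullet> v = -1" using wF Fchar by auto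
    have Gc: "G = {y \<in> P. y \<bullet> w = -1}" by (rule Gchar[OF wQ f(2)])
    have vG: "v \<in> G" using f(3) rel_interior_subset by blast
    have y0G: "y0 \<in> G" by (rule GelI[OF wQ y0])
    define W where "W = {u. \<forall>y\<in>G. u \<bullet> y = 0}"
    define T where "T = (\<lambda>q. q - w) ` F"
    have subW: "subspace W" unfolding W_def subspace_def by (auto simp: inner_add_left)
    have adF: "aff_dim F = int (dim T)"
      unfolding T_def by (rule aff_dim_eq_dim_subtract) (rule hull_inc[OF wF])
    have TW: "T \<subseteq> W" unfolding T_def W_def using star wF by (auto simp: inner_diff_left)
    have WT: "W \<subseteq> span T"
    proof
      fix u assume uW: "u \<in> W"
      have ue: "u \<bullet> e = 0" if "e \<in> E" "e \<bullet> w = -(\<Sum>j\<in>J. phi (Ds j) e)" for e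
        using tight[OF f(1) f(2) that]
      proof
        assume "e \<in> G" then show ?thesis using uW by (simp add: W_def)
      next
        assume "y0 + e \<in> G"
        then have "u \<bullet> (y0 + e) = 0" "u \<bullet> y0 = 0" using uW y0G by (auto simp: W_def)
        then show ?thesis by (simp add: inner_add_right)
      qed
      have ev: "\<forall>\<^sub>F \<epsilon> in at_right (0::real). \<forall>e\<in>E. (w + \<epsilon> *\<^sub>R u) \<bullet> e \<ge> -(\<Sum>j\<in>J. phi (Ds j) e)"
      proof (rule eventually_ball_finite[OF finE], rule ballI)
        fix e assume eE: "e \<in> E"
        have wge: "w \<bullet> e \<ge> -(\<Sum>j\<in>J. phi (Ds j) e)" using wQ Q_H[OF JI] eE by (auto simp: Q_def)
        show "\<forall>\<^sub>F \<epsilon> in at_right (0::real). (w + \<epsilon> *\<^sub>R u) \<bullet> e \<ge> -(\<Sum>j\<in>J. phi (Ds j) e)"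
        proof (cases "e \<bullet> w = -(\<Sum>j\<in>J. phi (Ds j) e)")
          case True
          then have "u \<bullet> e = 0" using ue eE by blast
          then show ?thesis using wge by (simp add: inner_add_left)
        next
          case False
          then have gt: "w \<bullet> e > -(\<Sum>j\<in>J. phi (Ds j) e)" using wge by (simp add: inner_commute)
          have "((\<lambda>\<epsilon>. (w + \<epsilon> *\<^sub>R u) \<bullet> e) \<longlongrightarrow> (w + 0 *\<^sub>R u) \<bullet> e) (at_right 0)"
            by (intro tendsto_intros)
          then have "\<forall>\<^sub>F \<epsilon> in at_right 0. -(\<Sum>j\<in>J. phi (Ds j) e) < (w + \<epsilon> *\<^sub>R u) \<bullet> e"
            using order_tendstoD(1) gt by simp
          then show ?thesis by (auto elim!: eventually_mono)
        qed
      qed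
      moreover have "\<forall>\<^sub>F \<epsilon> in at_right (0::real). \<epsilon> > 0" by (simp add: eventually_at_right_less)
      ultimately have "\<forall>\<^sub>F \<epsilon> in at_right (0::real). \<epsilon> > 0 \<and> (\<forall>e\<in>E. (w + \<epsilon> *\<^sub>R u) \<bullet> e \<ge> -(\<Sum>j\<in>J. phi (Ds j) e))"
        by (rule eventually_conj[rotated])
      then obtain \<epsilon> where eps: "\<epsilon> > 0" "\<forall>e\<in>E. (w + \<epsilon> *\<^sub>R u) \<bullet> e \<ge> -(\<Sum>j\<in>J. phi (Ds j) e)"
        using eventually_happens' trivial_limit_at_right_real by blast
      have "w + \<epsilon> *\<^sub>R u \<in> Q" using eps(2) Q_H[OF JI] by (simp add: Q_def)
      moreover have "u \<bullet> v = 0" using uW vG by (simp add: W_def)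
      ultimately have "w + \<epsilon> *\<^sub>R u \<in> F" using Fchar wv by (simp add: inner_add_left)
      then have "(w + \<epsilon> *\<^sub>R u) - w \<in> T" unfolding T_def by (rule imageI)
      then have "(1 / \<epsilon>) *\<^sub>R ((w + \<epsilon> *\<^sub>R u) - w) \<in> span T" by (intro span_mul span_base)
      then show "u \<in> span T" using eps(1) by simp
    qed
    have spT: "span T = W" using WT span_minimal[OF TW subW] by blast
    have dT: "dim T = dim W" by (metis spT dim_span)
    have Weq: "{y \<in> UNIV. \<forall>x \<in> span G. orthogonal x y} = W"
    proof
      show "{y \<in> UNIV. \<forall>x \<in> span G. orthogonal x y} \<subseteq> W"
        unfolding W_def by (auto simp: orthogonal_def inner_commute intro: span_base)
      show "W \<subseteq> {y \<in> UNIV. \<forall>x \<in> span G. orthogonal x y}"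
      proof (safe)
        fix u x assume uW: "u \<in> W" and x: "x \<in> span G"
        have "orthogonal u x" using orthogonal_to_span[OF x, of u] uW
          by (auto simp: W_def orthogonal_def)
        then show "orthogonal x u" by (simp add: orthogonal_commute)
      qed simp
    qed
    have dW: "dim W + dim (span G) = CARD('n)"
      using dim_subspace_orthogonal_to_vectors[of "span G" UNIV] Weq by simp
    have n0: "0 \<notin> affine hull G"
    proof
      assume "0 \<in> affine hull G"
      moreover have "affine hull G \<subseteq> {y. y \<bullet> w = -1}"
        using Gc by (intro hull_minimal) (auto simp: affine_hyperplane')
      ultimately show False by auto
    qed
    have "aff_dim (insert 0 G) = aff_dim G + 1" using aff_dim_insert[of 0 G] n0 by simp
    moreover have "aff_dim (insert 0 G) = int (dim (insert 0 G))"
      by (rule aff_dim_zero) (simp add: hull_inc)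
    moreover have "dim (insert 0 G) = dim G" by (simp add: dim_insert span_zero)
    ultimately have "int (dim G) = aff_dim G + 1" by simp
    then show ?thesis using adF dT dW by (simp add: dim_span)
  qed
  show ?thesis using fwd bwd dims by blast
qed

end

theorem mainTheorem16:
  fixes D :: "(real^'n) set" and r :: nat and Ds :: "nat \<Rightarrow> (real^'n) set"
    and i :: nat and J :: "nat set" and v :: "real^'n"
  assumes "nef_partition D r Ds"
    and "i \<in> J" and "J \<subseteq> {1..r}"
    and "v \<in> nabla0 D Ds i"
  shows "\<forall>w. lattice_pt w \<longrightarrow>
     ((w \<in> rel_interior (msum J (\<lambda>j. minface (Ds j) v)) \<longleftrightarrow>
        w \<in> Delta0 r Ds i \<and>
        v \<in> rel_interior (mplus (minface (nabla D Ds i) w)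
                                 (msum ({1..r} - J) (\<lambda>j. minface (nabla D Ds j) w))))
      \<and> (w \<in> rel_interior (msum J (\<lambda>j. minface (Ds j) v)) \<longrightarrow>
          aff_dim (msum J (\<lambda>j. minface (Ds j) v))
          + aff_dim (mplus (minface (nabla D Ds i) w)
                           (msum ({1..r} - J) (\<lambda>j. minface (nabla D Ds j) w)))
          = int CARD('n) - 1))"
proof (intro allI impI)
  fix w :: "real^'n"
  assume wl: "lattice_pt w"
  interpret nefctx D r Ds by unfold_locales (rule assms(1))
  show "((w \<in> rel_interior (msum J (\<lambda>j. minface (Ds j) v)) \<longleftrightarrow>
        w \<in> Delta0 r Ds i \<and>
        v \<in> rel_interior (mplus (minface (nabla D Ds i) w)
                                 (msum ({1..r} - J) (\<lambda>j. minface (nabla D Ds j) w))))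
      \<and> (w \<in> rel_interior (msum J (\<lambda>j. minface (Ds j) v)) \<longrightarrow>
          aff_dim (msum J (\<lambda>j. minface (Ds j) v))
          + aff_dim (mplus (minface (nabla D Ds i) w)
                           (msum ({1..r} - J) (\<lambda>j. minface (nabla D Ds j) w)))
          = int CARD('n) - 1))"
    using main[OF assms(2,3,4) wl] by simp
qed

end
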